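(* Let $n\in\{1,2,3\}$, $k\in\mathbb{N}$ ($k=1$ if $n=3$), and for $\omega=\sqrt{m^2-\epsilon^2}$ close to $m$ let $(v,u)$ be the solitary wave profile of the context. Define the $4\times4$ matrix-valued function $W(R,\epsilon)$ whose entries, with $v,u,f,f'$ evaluated at $r=R/\epsilon$, are $W_{13}=\frac1{2m}-\hat V(R)^{2k}-\frac{m-\omega-f}{\epsilon^2}$, $W_{24}=\omega-m-f$, $W_{31}=-\frac1{2m}+(2k+1)\hat V(R)^{2k}-\frac{\omega-m+f+2f'v^2}{\epsilon^2}$, $W_{32}=W_{41}=\frac{2f'vu}{\epsilon}$, $W_{42}=m-\omega+f-2f'u^2$, and all other entries zero. Then $\sup_{R}\|W(R,\epsilon)\|_{\mathbb{C}^4\to\mathbb{C}^4}=O(\epsilon^2)$ as $\epsilon\to0$.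
   Context: Solitary wave profile: with $\epsilon=\sqrt{m^2-\omega^2}$, $(v,u)$ is the real solution of $\omega v=\partial_r u+\frac{n-1}{r}u+mv-(v^2-u^2)^kv$, $\omega u=-\partial_r v-mu+(v^2-u^2)^ku$ (radial variable $r>0$ for $n=2,3$; $r=x\in\mathbb{R}$ for $n=1$) of the form $v(r)=\epsilon^{1/k}[\hat V(\epsilon r)+\tilde V(\epsilon r)]$, $u(r)=\epsilon^{1+1/k}[\hat U(\epsilon r)+\tilde U(\epsilon r)]$ with $\|\tilde V\|_{H^2}+\|\tilde U\|_{H^2}=O(\epsilon^2)$, where $\hat V(R)=(2m)^{-1/(2k)}F(R)$, $\hat U=-(2m)^{-1/(2k)-1}F'$, and $F$ is the unique positive radial $H^1(\mathbb{R}^n)$ solution of $-\Delta F-F^{2k+1}=-F$. Also $f=(v^2-u^2)^k$, $f'=k(v^2-u^2)^{k-1}$. ($W$ is the zero-order remainder obtained when the eigenvalue problem for the linearization $\begin{pmatrix}0&\mathrm{L}_-\\-\mathrm{L}_+&0\end{pmatrix}$ is rescaled by $R=\epsilon r$, $\varphi_2=\epsilon\Phi_2$, $\vartheta_2=\epsilon\Theta_2$, dividing rows 1,3 by $\epsilon^2$ and rows 2,4 by $\epsilon$, and compared with its $\epsilon\to0$ limit.) *)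

theory Defs
  imports "HOL-Analysis.Analysis"
begin

text \<open>Domain of the radial variable: the whole line for n = 1 (r = x), r > 0 for n = 2, 3.\<close>
definition rdom :: "nat \<Rightarrow> real set" where
  "rdom n = (if n = 1 then UNIV else {0<..})"

text \<open>Area of the unit sphere S^(n-1) for n = 2, 3.\<close>
definition sphere_area :: "nat \<Rightarrow> real" where
  "sphere_area n = (if n = 2 then 2 * pi else 4 * pi)"

text \<open>Twice classically differentiable on the (open) radial domain.\<close>
definition C2_on :: "real set \<Rightarrow> (real \<Rightarrow> real) \<Rightarrow> bool" where
  "C2_on D g \<longleftrightarrow> (\<forall>x\<in>D. g differentiable (at x) \<and> deriv g differentiable (at x))"

text \<open>Squared H^1 norm of the radial function x \<mapsto> g(|x|) on R^n (n = 2,3),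
  resp. of g on R (n = 1).\<close>
definition H1_sq :: "nat \<Rightarrow> (real \<Rightarrow> real) \<Rightarrow> ennreal" where
  "H1_sq n g = (if n = 1 then
      (\<integral>\<^sup>+ x. ennreal ((g x)\<^sup>2 + (deriv g x)\<^sup>2) \<partial>lborel)
    else ennreal (sphere_area n) *
      (\<integral>\<^sup>+ r. ennreal (((g r)\<^sup>2 + (deriv g r)\<^sup>2) * r ^ (n - 1)) * indicator {0<..} r \<partial>lborel))"

text \<open>Squared H^2 norm of the radial function x \<mapsto> g(|x|) on R^n (n = 2,3),
  resp. of g on R (n = 1). For radial functions |D^2 g|^2 = g''^2 + (n-1)(g'/r)^2.\<close>
definition H2_sq :: "nat \<Rightarrow> (real \<Rightarrow> real) \<Rightarrow> ennreal" where
  "H2_sq n g = (if n = 1 then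
      (\<integral>\<^sup>+ x. ennreal ((g x)\<^sup>2 + (deriv g x)\<^sup>2 + (deriv (deriv g) x)\<^sup>2) \<partial>lborel)
    else ennreal (sphere_area n) *
      (\<integral>\<^sup>+ r. ennreal (((g r)\<^sup>2 + (deriv g r)\<^sup>2 + (deriv (deriv g) r)\<^sup>2
                 + real (n - 1) * (deriv g r / r)\<^sup>2) * r ^ (n - 1))
             * indicator {0<..} r \<partial>lborel))"

text \<open>Vhat(R) = (2m)^(-1/(2k)) F(R).\<close>
definition Vhat :: "real \<Rightarrow> nat \<Rightarrow> (real \<Rightarrow> real) \<Rightarrow> real \<Rightarrow> real" where
  "Vhat m k F R = (2 * m) powr (- 1 / (2 * real k)) * F R"

text \<open>Uhat(R) = -(2m)^(-1/(2k)-1) F'(R).\<close>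
definition Uhat :: "real \<Rightarrow> nat \<Rightarrow> (real \<Rightarrow> real) \<Rightarrow> real \<Rightarrow> real" where
  "Uhat m k F R = - ((2 * m) powr (- 1 / (2 * real k) - 1) * deriv F R)"

text \<open>The 4x4 matrix W(R,\<epsilon>), with v, u, f, f' evaluated at r = R/\<epsilon>, \<omega> = sqrt(m^2 - \<epsilon>^2).
  Indices 1,2,3,4 of the numeral type 4 are used as labels (4 = 0 in that type).\<close>
definition W_mat :: "real \<Rightarrow> nat \<Rightarrow> (real \<Rightarrow> real) \<Rightarrow> (real \<Rightarrow> real) \<Rightarrow> (real \<Rightarrow> real)
                      \<Rightarrow> real \<Rightarrow> real \<Rightarrow> complex^4^4" where
  "W_mat m k F v u \<epsilon> R =
    (let r = R / \<epsilon>; \<omega> = sqrt (m\<^sup>2 - \<epsilon>\<^sup>2); vv = v r; uu = u r;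
         f = (vv\<^sup>2 - uu\<^sup>2) ^ k; f' = real k * (vv\<^sup>2 - uu\<^sup>2) ^ (k - 1);
         W13 = 1 / (2 * m) - (Vhat m k F R) ^ (2 * k) - (m - \<omega> - f) / \<epsilon>\<^sup>2;
         W24 = \<omega> - m - f;
         W31 = - 1 / (2 * m) + (2 * real k + 1) * (Vhat m k F R) ^ (2 * k)
               - (\<omega> - m + f + 2 * f' * vv\<^sup>2) / \<epsilon>\<^sup>2;
         W32 = 2 * f' * vv * uu / \<epsilon>;
         W41 = 2 * f' * vv * uu / \<epsilon>;
         W42 = m - \<omega> + f - 2 * f' * uu\<^sup>2
     in (\<chi> i j. complex_of_real
          (if i = 1 \<and> j = 3 then W13
           else if i = 2 \<and> j = 4 then W24
           else if i = 3 \<and> j = 1 then W31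
           else if i = 3 \<and> j = 2 then W32
           else if i = 4 \<and> j = 1 then W41
           else if i = 4 \<and> j = 2 then W42
           else 0)))"

text \<open>Operator norm C^4 \<rightarrow> C^4 (Euclidean norms).\<close>
definition mat_opnorm :: "complex^4^4 \<Rightarrow> real" where
  "mat_opnorm M = onorm (\<lambda>x. M *v x)"

end

theory Submission
  imports Defs
begin

lemma onorm_complex_mat:
  fixes A :: "complex^'n^'m"
  shows "onorm((*v) A) \<le> (\<Sum>i\<in>UNIV. \<Sum>j\<in>UNIV. norm (A $ i $ j))"
proof (rule onorm_le)
  fix x
  have "norm (A *v x) \<le> (\<Sum>i\<in>UNIV. norm ((A *v x) $ i))"
    by (simp add: norm_vec_def L2_set_le_sum)
  also have "\<dots> \<le> (\<Sum>i\<in>UNIV. \<Sum>j\<in>UNIV. norm (A $ i $ j) * norm x)"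
  proof (rule sum_mono)
    fix i
    have "norm ((A *v x) $ i) = norm (\<Sum>j\<in>UNIV. A $ i $ j * x $ j)"
      by (simp add: matrix_vector_mult_def)
    also have "\<dots> \<le> (\<Sum>j\<in>UNIV. norm (A $ i $ j * x $ j))"
      by (rule norm_sum)
    also have "\<dots> \<le> (\<Sum>j\<in>UNIV. norm (A $ i $ j) * norm x)"
      proof (intro sum_mono)
      fix j
      have "norm (x $ j) \<le> norm x" by (rule Finite_Cartesian_Product.norm_nth_le)
      then show "norm (A $ i $ j * x $ j) \<le> norm (A $ i $ j) * norm x"
        unfolding norm_mult by (rule mult_left_mono) simp
    qed
    finally show "norm ((A *v x) $ i) \<le> (\<Sum>j\<in>UNIV. norm (A $ i $ j) * norm x)" .
  qed
  finally show "norm (A *v x) \<le> (\<Sum>i\<in>UNIV. \<Sum>j\<in>UNIV. norm (A $ i $ j)) * norm x"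
    by (simp add: sum_distrib_right)
qed

lemma nn_integral_Icc_cont:
  fixes h :: "real \<Rightarrow> real"
  assumes "continuous_on {a..b} h" "\<And>x. x \<in> {a..b} \<Longrightarrow> 0 \<le> h x"
  shows "(\<integral>\<^sup>+x. ennreal (h x) * indicator {a..b} x \<partial>lborel) = ennreal (integral {a..b} h)"
proof -
  let ?f = "\<lambda>x. indicator {a..b} x *\<^sub>R h x"
  have m: "?f \<in> borel_measurable borel"
    by (rule borel_measurable_continuous_on_indicator) (auto simp: assms)
  have nn: "\<And>x. 0 \<le> ?f x" using assms(2) by (auto simp: indicator_def)
  have "(h has_integral integral {a..b} h) {a..b}"
    using integrable_continuous_interval[OF assms(1)] by (simp add: has_integral_integral)
  then have "((\<lambda>x. if x \<in> {a..b} then h x else 0) has_integral integral {a..b} h) UNIV"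
    by (subst has_integral_restrict_UNIV)
  then have "(?f has_integral integral {a..b} h) UNIV"
    by (rule has_integral_eq[rotated]) (simp add: indicator_def)
  then have "integral\<^sup>N lborel ?f = ennreal (integral {a..b} h)"
    by (rule nn_integral_has_integral_lborel[OF m nn])
  moreover have "(\<integral>\<^sup>+x. ennreal (h x) * indicator {a..b} x \<partial>lborel) = integral\<^sup>N lborel ?f"
    by (intro nn_integral_cong) (auto simp: indicator_def)
  ultimately show ?thesis by simp
qed

lemma ftc_abs:
  fixes g g' :: "real \<Rightarrow> real"
  assumes "a \<le> b" "\<And>x. x \<in> {a..b} \<Longrightarrow> (g has_real_derivative g' x) (at x)"
    "continuous_on {a..b} g'"
  shows "\<bar>g b - g a\<bar> \<le> integral {a..b} (\<lambda>x. \<bar>g' x\<bar>)"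
proof -
  have "(g' has_integral (g b - g a)) {a..b}"
    using assms by (intro fundamental_theorem_of_calculus)
      (auto simp: has_real_derivative_iff_has_vector_derivative[symmetric] intro: DERIV_subset)
  then have "g b - g a = integral {a..b} g'" by (simp add: integral_unique)
  moreover have "norm (integral {a..b} g') \<le> integral {a..b} (\<lambda>x. \<bar>g' x\<bar>)"
    by (rule integral_norm_bound_integral)
      (auto intro!: integrable_continuous_interval continuous_intros assms(3))
  ultimately show ?thesis by simp
qed

lemma sob_unit:
  fixes g g' :: "real \<Rightarrow> real"
  assumes "\<And>t. t \<in> {x..x+1} \<Longrightarrow> (g has_real_derivative g' t) (at t)"
    "continuous_on {x..x+1} g'"
  shows "(g x)\<^sup>2 \<le> 2 * integral {x..x+1} (\<lambda>t. (g t)\<^sup>2 + (g' t)\<^sup>2)"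
proof -
  have gc: "continuous_on {x..x+1} g"
    using assms(1) by (meson DERIV_isCont continuous_at_imp_continuous_on)
  have c2: "continuous_on {x..x+1} (\<lambda>t. (g t)\<^sup>2)" by (intro continuous_intros gc)
  obtain y where y: "y \<in> {x..x+1}" "\<And>t. t\<in>{x..x+1} \<Longrightarrow> (g y)\<^sup>2 \<le> (g t)\<^sup>2"
    using continuous_attains_inf[OF compact_Icc _ c2] by auto
  have i1: "(\<lambda>t. (g t)\<^sup>2) integrable_on {x..x+1}" by (intro integrable_continuous_interval c2)
  have i2: "(\<lambda>t. (g t)\<^sup>2 + (g' t)\<^sup>2) integrable_on {x..x+1}"
    by (intro integrable_continuous_interval continuous_intros gc assms(2))
  have i3: "(\<lambda>t. \<bar>2 * g t * g' t\<bar>) integrable_on {x..x+1}"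
    by (intro integrable_continuous_interval continuous_intros gc assms(2))
  have "(g y)\<^sup>2 = integral {x..x+1} (\<lambda>t. (g y)\<^sup>2)" by simp
  also have "\<dots> \<le> integral {x..x+1} (\<lambda>t. (g t)\<^sup>2)"
    using y by (intro integral_le i1) auto
  also have "\<dots> \<le> integral {x..x+1} (\<lambda>t. (g t)\<^sup>2 + (g' t)\<^sup>2)"
    by (intro integral_le i1 i2) auto
  finally have A: "(g y)\<^sup>2 \<le> integral {x..x+1} (\<lambda>t. (g t)\<^sup>2 + (g' t)\<^sup>2)" .
  have "\<bar>(g y)\<^sup>2 - (g x)\<^sup>2\<bar> \<le> integral {x..y} (\<lambda>t. \<bar>2 * g t * g' t\<bar>)"
  proof (rule ftc_abs)
    show "x \<le> y" using y by auto
    fix t assume "t \<in> {x..y}"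
    then have "t \<in> {x..x+1}" using y by auto
    from DERIV_mult[OF assms(1)[OF this] assms(1)[OF this]]
    show "((\<lambda>t. (g t)\<^sup>2) has_real_derivative 2 * g t * g' t) (at t)"
      by (simp add: power2_eq_square algebra_simps)
  next
    show "continuous_on {x..y} (\<lambda>t. 2 * g t * g' t)"
      using y by (intro continuous_intros continuous_on_subset[OF gc] continuous_on_subset[OF assms(2)]) auto
  qed
  also have "\<dots> \<le> integral {x..x+1} (\<lambda>t. \<bar>2 * g t * g' t\<bar>)"
    using y by (intro integral_subset_le i3 integrable_on_subinterval[OF i3]) auto
  also have "\<dots> \<le> integral {x..x+1} (\<lambda>t. (g t)\<^sup>2 + (g' t)\<^sup>2)"
  proof (intro integral_le i3 i2)
    fix t
    have "0 \<le> (\<bar>g t\<bar> - \<bar>g' t\<bar>)\<^sup>2" by simp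
    then show "\<bar>2 * g t * g' t\<bar> \<le> (g t)\<^sup>2 + (g' t)\<^sup>2"
      by (simp add: power2_eq_square abs_mult algebra_simps)
  qed
  finally show ?thesis using A by linarith
qed


lemma C2_derivs:
  assumes "C2_on D g" "t \<in> D"
  shows "(g has_real_derivative deriv g t) (at t)" "isCont (deriv g) t"
  using assms unfolding C2_on_def
  by (auto simp: DERIV_deriv_iff_real_differentiable intro: differentiable_imp_continuous_within)

lemma C2_cont_on:
  assumes "C2_on D g" "S \<subseteq> D"
  shows "continuous_on S (deriv g)" "continuous_on S g"
proof -
  show "continuous_on S (deriv g)"
    using assms C2_derivs(2)[OF assms(1)] by (intro continuous_at_imp_continuous_on) auto
  show "continuous_on S g"
    using assms C2_derivs(1)[OF assms(1)] by (intro continuous_at_imp_continuous_on) (auto intro: DERIV_isCont)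
qed

lemma unit_bound:
  fixes g :: "real \<Rightarrow> real"
  assumes "C2_on D g" "{x..x+1} \<subseteq> D"
    and I: "(\<integral>\<^sup>+t. ennreal ((g t)\<^sup>2 + (deriv g t)\<^sup>2) * indicator {x..x+1} t \<partial>lborel) \<le> ennreal (B\<^sup>2)"
  shows "(g x)\<^sup>2 \<le> 2 * B\<^sup>2"
proof -
  have d: "\<And>t. t \<in> {x..x+1} \<Longrightarrow> (g has_real_derivative deriv g t) (at t)"
    using C2_derivs(1)[OF assms(1)] assms(2) by auto
  have c: "continuous_on {x..x+1} (deriv g)" by (rule C2_cont_on(1)[OF assms(1,2)])
  have gc: "continuous_on {x..x+1} g" by (rule C2_cont_on(2)[OF assms(1,2)])
  have "(\<integral>\<^sup>+t. ennreal ((g t)\<^sup>2 + (deriv g t)\<^sup>2) * indicator {x..x+1} t \<partial>lborel)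
      = ennreal (integral {x..x+1} (\<lambda>t. (g t)\<^sup>2 + (deriv g t)\<^sup>2))"
    by (rule nn_integral_Icc_cont) (auto intro!: continuous_intros gc c)
  with I have "integral {x..x+1} (\<lambda>t. (g t)\<^sup>2 + (deriv g t)\<^sup>2) \<le> B\<^sup>2"
    by (simp add: ennreal_le_iff)
  moreover have "(g x)\<^sup>2 \<le> 2 * integral {x..x+1} (\<lambda>t. (g t)\<^sup>2 + (deriv g t)\<^sup>2)"
    by (rule sob_unit[OF d c])
  ultimately show ?thesis by linarith
qed

lemma sob_H2:
  fixes g :: "real \<Rightarrow> real"
  assumes n: "n \<in> {1,2,3}" and g: "C2_on (rdom n) g" and H: "H2_sq n g \<le> ennreal (B\<^sup>2)"
    and B: "B > 0" and x: "x \<in> rdom n"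
  shows "\<bar>g x\<bar> \<le> 3 * B"
proof (cases "n = 1")
  case True
  have "(\<integral>\<^sup>+t. ennreal ((g t)\<^sup>2 + (deriv g t)\<^sup>2) * indicator {x..x+1} t \<partial>lborel)
      \<le> (\<integral>\<^sup>+ x. ennreal ((g x)\<^sup>2 + (deriv g x)\<^sup>2 + (deriv (deriv g) x)\<^sup>2) \<partial>lborel)"
    by (intro nn_integral_mono) (auto simp: indicator_def intro!: ennreal_leI)
  also have "\<dots> \<le> ennreal (B\<^sup>2)" using H True by (simp add: H2_sq_def)
  finally have I1: "(\<integral>\<^sup>+t. ennreal ((g t)\<^sup>2 + (deriv g t)\<^sup>2) * indicator {x..x+1} t \<partial>lborel) \<le> ennreal (B\<^sup>2)" .
  have "(g x)\<^sup>2 \<le> 2 * B\<^sup>2"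
    by (rule unit_bound[OF g _ I1]) (simp add: rdom_def True)
  also have "\<dots> \<le> (3 * B)\<^sup>2" by (simp add: power2_eq_square)
  finally have "\<bar>g x\<bar> \<le> \<bar>3 * B\<bar>" by (simp only: abs_le_square_iff)
  then show ?thesis using B by simp
next
  case False
  then have n23: "n = 2 \<or> n = 3" using n by auto
  have rd: "rdom n = {0<..}" using False by (simp add: rdom_def)
  define J where "J = (\<integral>\<^sup>+ r. ennreal (((g r)\<^sup>2 + (deriv g r)\<^sup>2 + (deriv (deriv g) r)\<^sup>2
                 + real (n - 1) * (deriv g r / r)\<^sup>2) * r ^ (n - 1))
             * indicator {0<..} r \<partial>lborel)"
  have sa: "sphere_area n \<ge> 1" unfolding sphere_area_def using pi_gt3 by auto
  have "J = ennreal 1 * J" by simp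
  also have "\<dots> \<le> ennreal (sphere_area n) * J"
    by (intro mult_right_mono ennreal_leI sa) simp
  also have "\<dots> = H2_sq n g" using False by (simp add: H2_sq_def J_def)
  finally have JB: "J \<le> ennreal (B\<^sup>2)" using H by simp
  have unit: "(g y)\<^sup>2 \<le> 2 * B\<^sup>2" if y: "y \<ge> 1" for y
  proof (rule unit_bound[OF g])
    show "{y..y+1} \<subseteq> rdom n" using y by (auto simp: rd)
    have "(\<integral>\<^sup>+t. ennreal ((g t)\<^sup>2 + (deriv g t)\<^sup>2) * indicator {y..y+1} t \<partial>lborel) \<le> J"
      unfolding J_def
    proof (intro nn_integral_mono)
      fix t
      show "ennreal ((g t)\<^sup>2 + (deriv g t)\<^sup>2) * indicator {y..y+1} t
        \<le> ennreal (((g t)\<^sup>2 + (deriv g t)\<^sup>2 + (deriv (deriv g) t)\<^sup>2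
                 + real (n - 1) * (deriv g t / t)\<^sup>2) * t ^ (n - 1)) * indicator {0<..} t"
      proof (cases "t \<in> {y..y+1}")
        case True
        then have t1: "t \<ge> 1" using y by auto
        then have p: "t ^ (n - 1) \<ge> 1" by (simp add: one_le_power)
        have "(g t)\<^sup>2 + (deriv g t)\<^sup>2 \<le> (g t)\<^sup>2 + (deriv g t)\<^sup>2 + (deriv (deriv g) t)\<^sup>2
                 + real (n - 1) * (deriv g t / t)\<^sup>2" by simp
        also have "\<dots> \<le> (\<dots>) * t ^ (n - 1)"
        proof -
          have "0 \<le> (g t)\<^sup>2 + (deriv g t)\<^sup>2 + (deriv (deriv g) t)\<^sup>2
                 + real (n - 1) * (deriv g t / t)\<^sup>2" by simp
          from mult_left_mono[OF p this] show ?thesis by simp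
        qed
        finally have le: "(g t)\<^sup>2 + (deriv g t)\<^sup>2 \<le> ((g t)\<^sup>2 + (deriv g t)\<^sup>2 + (deriv (deriv g) t)\<^sup>2
                 + real (n - 1) * (deriv g t / t)\<^sup>2) * t ^ (n - 1)" .
        show ?thesis using True t1 ennreal_leI[OF le] by (simp add: indicator_def del: ennreal_plus)
      qed simp
    qed
    then show "(\<integral>\<^sup>+t. ennreal ((g t)\<^sup>2 + (deriv g t)\<^sup>2) * indicator {y..y+1} t \<partial>lborel) \<le> ennreal (B\<^sup>2)"
      using JB by simp
  qed
  have abs2: "\<bar>g y\<bar> \<le> 2 * B" if "y \<ge> 1" for y
  proof -
    have u: "(g y)\<^sup>2 \<le> 2 * B\<^sup>2" by (rule unit[OF that])
    have e: "(2 * B)\<^sup>2 = 4 * B\<^sup>2" by (simp add: power_mult_distrib)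
    have "(g y)\<^sup>2 \<le> (2 * B)\<^sup>2" unfolding e using u zero_le_power2[of B] by linarith
    then have "\<bar>g y\<bar> \<le> \<bar>2 * B\<bar>" by (simp only: abs_le_square_iff)
    then show ?thesis using B by simp
  qed
  show ?thesis
  proof (cases "x \<ge> 1")
    case True then show ?thesis using abs2[OF True] B by simp
  next
    case False
    have x0: "0 < x" "x \<le> 1" using x False by (auto simp: rd)
    have sub: "{x..1} \<subseteq> rdom n" using x0 by (auto simp: rd)
    have dc: "continuous_on {x..1} (deriv g)" by (rule C2_cont_on(1)[OF g sub])
    have "\<bar>g 1 - g x\<bar> \<le> integral {x..1} (\<lambda>t. \<bar>deriv g t\<bar>)"
      using C2_derivs(1)[OF g] sub x0 by (intro ftc_abs dc) auto
    also have "\<dots> \<le> integral {x..1} (\<lambda>t. (deriv g t)\<^sup>2 / (2 * B) + B / 2)"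
    proof (intro integral_le integrable_continuous_interval continuous_intros dc)
      fix t
      have "0 \<le> (\<bar>deriv g t\<bar> - B)\<^sup>2" by simp
      then have "2 * B * \<bar>deriv g t\<bar> \<le> (deriv g t)\<^sup>2 + B\<^sup>2"
        by (simp add: power2_eq_square algebra_simps)
      then show "\<bar>deriv g t\<bar> \<le> (deriv g t)\<^sup>2 / (2 * B) + B / 2"
        using B by (simp add: field_simps power2_eq_square)
    qed (use B in auto)
    also have "\<dots> = integral {x..1} (\<lambda>t. (deriv g t)\<^sup>2) / (2 * B) + B / 2 * (1 - x)"
      using x0 dc B
      by (subst integral_add) (auto intro!: integrable_continuous_interval continuous_intros simp: integral_divide)
    also have "\<dots> \<le> B\<^sup>2 / (2 * B) + B / 2"
    proof -
      have "ennreal (integral {x..1} (\<lambda>t. (deriv g t)\<^sup>2))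
          = (\<integral>\<^sup>+t. ennreal ((deriv g t)\<^sup>2) * indicator {x..1} t \<partial>lborel)"
        by (rule nn_integral_Icc_cont[symmetric]) (auto intro!: continuous_intros dc)
      also have "\<dots> \<le> J"
        unfolding J_def
      proof (intro nn_integral_mono)
        fix t
        show "ennreal ((deriv g t)\<^sup>2) * indicator {x..1} t
          \<le> ennreal (((g t)\<^sup>2 + (deriv g t)\<^sup>2 + (deriv (deriv g) t)\<^sup>2
                 + real (n - 1) * (deriv g t / t)\<^sup>2) * t ^ (n - 1)) * indicator {0<..} t"
        proof (cases "t \<in> {x..1}")
          case True
          then have t: "0 < t" "t \<le> 1" using x0 by auto
          have key: "(deriv g t)\<^sup>2 \<le> real (n - 1) * (deriv g t / t)\<^sup>2 * t ^ (n - 1)"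
            using n23
          proof
            assume "n = 2"
            then have "real (n - 1) * (deriv g t / t)\<^sup>2 * t ^ (n - 1) = (deriv g t)\<^sup>2 / t"
              using t by (simp add: power2_eq_square field_simps)
            also have "\<dots> \<ge> (deriv g t)\<^sup>2" using t by (simp add: le_divide_eq mult_left_le)
            finally show ?thesis .
          next
            assume "n = 3"
            then have "real (n - 1) * (deriv g t / t)\<^sup>2 * t ^ (n - 1) = 2 * (deriv g t)\<^sup>2"
              using t by (simp add: power2_eq_square field_simps)
            then show ?thesis by simp
          qed
          have "(deriv g t)\<^sup>2 \<le> ((g t)\<^sup>2 + (deriv g t)\<^sup>2 + (deriv (deriv g) t)\<^sup>2
                 + real (n - 1) * (deriv g t / t)\<^sup>2) * t ^ (n - 1)"
          proof -
            have nn: "0 \<le> ((g t)\<^sup>2 + (deriv g t)\<^sup>2 + (deriv (deriv g) t)\<^sup>2) * t ^ (n - 1)"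
              using t by simp
            have "((g t)\<^sup>2 + (deriv g t)\<^sup>2 + (deriv (deriv g) t)\<^sup>2
                 + real (n - 1) * (deriv g t / t)\<^sup>2) * t ^ (n - 1)
              = ((g t)\<^sup>2 + (deriv g t)\<^sup>2 + (deriv (deriv g) t)\<^sup>2) * t ^ (n - 1)
                + real (n - 1) * (deriv g t / t)\<^sup>2 * t ^ (n - 1)"
              by (simp add: distrib_right)
            then show ?thesis using nn key by linarith
          qed
          then show ?thesis using True t by (auto intro!: ennreal_leI)
        qed simp
      qed
      also have "\<dots> \<le> ennreal (B\<^sup>2)" by (rule JB)
      finally have "integral {x..1} (\<lambda>t. (deriv g t)\<^sup>2) \<le> B\<^sup>2"
        by (simp add: ennreal_le_iff)
      then show ?thesis using B x0
        by (intro add_mono divide_right_mono) (auto simp: mult_left_le)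
    qed
    also have "\<dots> = B" using B by (simp add: power2_eq_square field_simps)
    finally have "\<bar>g 1 - g x\<bar> \<le> B" .
    then show ?thesis using abs2[of 1] by linarith
  qed
qed


lemma deriv_cmp:
  fixes f g f' g' :: "real \<Rightarrow> real"
  assumes "a \<le> b" "\<And>s. a \<le> s \<Longrightarrow> s \<le> b \<Longrightarrow> (f has_real_derivative f' s) (at s)"
    "\<And>s. a \<le> s \<Longrightarrow> s \<le> b \<Longrightarrow> (g has_real_derivative g' s) (at s)"
    "\<And>s. a \<le> s \<Longrightarrow> s \<le> b \<Longrightarrow> f' s \<le> g' s"
  shows "f b - f a \<le> g b - g a"
proof -
  have "(\<lambda>s. f s - g s) b \<le> (\<lambda>s. f s - g s) a"
  proof (rule DERIV_nonpos_imp_nonincreasing[OF assms(1)])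
    fix x assume x: "a \<le> x" "x \<le> b"
    show "\<exists>y. DERIV (\<lambda>s. f s - g s) x :> y \<and> y \<le> 0"
      using DERIV_diff[OF assms(2)[OF x] assms(3)[OF x]] assms(4)[OF x] by auto
  qed
  then show ?thesis by simp
qed

lemma energy_bound:
  fixes y z E0 :: real
  assumes k: "k \<ge> 1"
    and E: "z\<^sup>2/2 - y\<^sup>2/2 + y^(2*k+2)/(2*k+2) \<le> E0"
  shows "y\<^sup>2 \<le> max 4 (2*E0)" "z\<^sup>2 \<le> 2*E0 + y\<^sup>2"
proof -
  define w where "w = y\<^sup>2"
  have w0: "w \<ge> 0" by (simp add: w_def)
  have "y^(2*k+2) = y^(2*(k+1))" by (simp add: algebra_simps)
  also have "\<dots> = w^(k+1)" unfolding w_def by (rule power_mult)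
  finally have yw: "y^(2*k+2) = w^(k+1)" .
  have nn: "y^(2*k+2)/(2*k+2) \<ge> 0" unfolding yw using w0 by simp
  show "z\<^sup>2 \<le> 2*E0 + y\<^sup>2" using E nn by linarith
  show "y\<^sup>2 \<le> max 4 (2*E0)"
  proof (cases "w \<ge> 4")
    case True
    have "1 + real k * (w - 1) \<le> (1 + (w - 1))^k"
      using True by (intro Bernoulli_inequality) simp
    then have wk: "1 + real k * (w - 1) \<le> w^k" by simp
    have "real k * 3 \<le> real k * (w - 1)" using True by (intro mult_left_mono) auto
    moreover have "1 \<le> real k" using k by simp
    ultimately have "2 * real k + 2 \<le> 1 + real k * (w - 1)" by linarith
    then have "w * (2 * real k + 2) \<le> w * (1 + real k * (w - 1))"
      using w0 by (intro mult_left_mono) auto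
    also have "\<dots> \<le> w * w^k" using wk w0 by (intro mult_left_mono)
    finally have "w \<le> w^(k+1)/(2*k+2)" by (simp add: field_simps)
    then have "w \<le> y^(2*k+2)/(2*k+2)" unfolding yw by simp
    moreover have "0 \<le> z\<^sup>2" by simp
    ultimately have "w \<le> 2*E0" using E w_def by linarith
    then show ?thesis by (simp add: w_def)
  qed (simp add: w_def)
qed

lemma dE:
  fixes F :: "real \<Rightarrow> real"
  assumes "(F has_real_derivative deriv F R) (at R)"
    "(deriv F has_real_derivative (F R - F R ^ (2*k+1) - c * deriv F R)) (at R)"
  shows "((\<lambda>r. (deriv F r)\<^sup>2/2 - (F r)\<^sup>2/2 + F r^(2*k+2)/(2*k+2)) has_real_derivative
          - c * (deriv F R)\<^sup>2) (at R)"
proof -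
  have "((\<lambda>r. (deriv F r)\<^sup>2/2 - (F r)\<^sup>2/2 + F r^(2*k+2)/(2*k+2)) has_real_derivative
     (real 2 * ((F R - F R ^ (2*k+1) - c * deriv F R) * deriv F R ^ (2 - 1)))/2
      - (real 2 * (deriv F R * F R ^ (2 - 1)))/2
      + (real (2*k+2) * (deriv F R * F R ^ (2*k+2 - 1)))/(2*k+2)) (at R)"
    using DERIV_add[OF DERIV_diff[OF DERIV_cdivide[OF DERIV_power[OF assms(2), of 2], of 2]
        DERIV_cdivide[OF DERIV_power[OF assms(1), of 2], of 2]]
        DERIV_cdivide[OF DERIV_power[OF assms(1), of "2*k+2"], of "2*k+2"]] by simp
  moreover have "(real 2 * ((F R - F R ^ (2*k+1) - c * deriv F R) * deriv F R ^ (2 - 1)))/2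
      - (real 2 * (deriv F R * F R ^ (2 - 1)))/2
      + (real (2*k+2) * (deriv F R * F R ^ (2*k+2 - 1)))/(2*k+2) = - c * (deriv F R)\<^sup>2"
    by (simp add: field_simps power2_eq_square)
  ultimately show ?thesis by simp
qed


lemma amgm_abs:
  fixes x t :: real assumes "t > 0"
  shows "\<bar>x\<bar> \<le> (t * x\<^sup>2 + 1 / t) / 2"
proof -
  have "0 \<le> (t * \<bar>x\<bar> - 1)\<^sup>2" by simp
  then have "2 * t * \<bar>x\<bar> \<le> t\<^sup>2 * x\<^sup>2 + 1" by (simp add: power2_eq_square algebra_simps)
  then show ?thesis using assms by (simp add: field_simps power2_eq_square)
qed

lemma F_minus_pow_le1:
  fixes x :: real assumes "x > 0" shows "x - x^(2*k+1) \<le> 1"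
proof (cases "x \<le> 1")
  case True then show ?thesis using assms zero_le_power[of x "2*k+1"] by linarith
next
  case False
  then have "x^1 \<le> x^(2*k+1)" by (intro power_increasing) auto
  then show ?thesis by simp
qed

context
  fixes n k :: nat and F :: "real \<Rightarrow> real"
  assumes n23: "n = 2 \<or> n = 3" and kge: "k \<ge> 1" and k3: "n = 3 \<longrightarrow> k = 1"
    and C2: "C2_on {0<..} F" and pos: "\<And>R. R > 0 \<Longrightarrow> F R > 0"
    and ode: "\<And>R. R > 0 \<Longrightarrow> deriv (deriv F) R = F R - F R ^ (2*k+1) - real (n-1) / R * deriv F R"
    and I1: "(\<integral>\<^sup>+ r. ennreal (((F r)\<^sup>2 + (deriv F r)\<^sup>2) * r ^ (n - 1)) * indicator {0<..} r \<partial>lborel) < \<infinity>"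
begin

lemma dF: "R > 0 \<Longrightarrow> (F has_real_derivative deriv F R) (at R)"
  using C2_derivs(1)[OF C2] by auto

lemma dF': "R > 0 \<Longrightarrow> (deriv F has_real_derivative (F R - F R ^ (2*k+1) - real (n-1) / R * deriv F R)) (at R)"
proof -
  assume R: "R > 0"
  then have "deriv F differentiable (at R)" using C2 by (auto simp: C2_on_def)
  then have "(deriv F has_real_derivative deriv (deriv F) R) (at R)"
    by (simp add: DERIV_deriv_iff_real_differentiable)
  then show ?thesis using ode[OF R] by simp
qed

lemma dG: "R > 0 \<Longrightarrow> ((\<lambda>r. r^(n-1) * deriv F r) has_real_derivative R^(n-1) * (F R - F R^(2*k+1))) (at R)"
proof -
  assume R: "R > 0"
  from DERIV_mult[OF DERIV_pow[of "n-1"] dF'[OF R]]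
  show ?thesis
    by (rule DERIV_cong) (use n23 R in \<open>auto simp: field_simps power2_eq_square\<close>)
qed

definition "Iv = (\<integral>\<^sup>+ r. ennreal (((F r)\<^sup>2 + (deriv F r)\<^sup>2) * r ^ (n - 1)) * indicator {0<..} r \<partial>lborel)"

lemma Iv_fin: obtains c where "Iv = ennreal c" "0 \<le> c"
  using I1 unfolding Iv_def[symmetric] by (cases Iv rule: ennreal_cases) auto

lemma liminf:
  assumes eta: "\<eta> > 0" and delta: "\<delta> > 0"
  shows "\<exists>\<rho>. 0 < \<rho> \<and> \<rho> < \<delta> \<and> \<bar>\<rho>^(n-1) * deriv F \<rho>\<bar> < \<eta>"
proof (rule ccontr)
  assume "\<not> ?thesis"
  then have H: "\<And>\<rho>. 0 < \<rho> \<Longrightarrow> \<rho> < \<delta> \<Longrightarrow> \<eta> \<le> \<bar>\<rho>^(n-1) * deriv F \<rho>\<bar>" by (meson not_less)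
  obtain c where c: "Iv = ennreal c" "0 \<le> c" by (rule Iv_fin)
  obtain N :: nat where N: "c / \<eta>\<^sup>2 < real N" using reals_Archimedean2 by blast
  define b where "b = min \<delta> 1 / 2"
  define a where "a = b * exp (- real N)"
  have b: "0 < b" "b < \<delta>" "b \<le> 1/2" using delta by (auto simp: b_def)
  have e1: "exp (- real N) \<le> 1" by simp
  have a: "0 < a" "a \<le> b" using b e1 by (auto simp: a_def mult_left_le)
  have lna: "ln a = ln b - real N" using a b by (simp add: a_def ln_mult)
  have "((\<lambda>r. \<eta>\<^sup>2 / r) has_integral (\<eta>\<^sup>2 * ln b - \<eta>\<^sup>2 * ln a)) {a..b}"
  proof (rule fundamental_theorem_of_calculus[OF a(2)])
    fix x assume x: "x \<in> {a..b}"
    then have "x > 0" using a by auto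
    then have "((\<lambda>r. \<eta>\<^sup>2 * ln r) has_real_derivative \<eta>\<^sup>2 * (1/x)) (at x within {a..b})"
      by (intro DERIV_cmult DERIV_ln_divide[THEN DERIV_subset]) auto
    then show "((\<lambda>r. \<eta>\<^sup>2 * ln r) has_vector_derivative \<eta>\<^sup>2 / x) (at x within {a..b})"
      by (simp add: has_real_derivative_iff_has_vector_derivative)
  qed
  then have int: "integral {a..b} (\<lambda>r. \<eta>\<^sup>2 / r) = \<eta>\<^sup>2 * real N"
    using lna by (simp add: integral_unique algebra_simps)
  have "ennreal (\<eta>\<^sup>2 * real N) = (\<integral>\<^sup>+ r. ennreal (\<eta>\<^sup>2 / r) * indicator {a..b} r \<partial>lborel)"
  proof -
    have cont: "continuous_on {a..b} (\<lambda>r. \<eta>\<^sup>2 / r)" using a by (intro continuous_intros) auto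
    have "(\<integral>\<^sup>+ r. ennreal (\<eta>\<^sup>2 / r) * indicator {a..b} r \<partial>lborel) = ennreal (integral {a..b} (\<lambda>r. \<eta>\<^sup>2 / r))"
      by (rule nn_integral_Icc_cont[OF cont]) (use a in auto)
    then show ?thesis using int by simp
  qed
  also have "\<dots> \<le> Iv" unfolding Iv_def
  proof (intro nn_integral_mono)
    fix r
    show "ennreal (\<eta>\<^sup>2 / r) * indicator {a..b} r
      \<le> ennreal (((F r)\<^sup>2 + (deriv F r)\<^sup>2) * r ^ (n - 1)) * indicator {0<..} r"
    proof (cases "r \<in> {a..b}")
      case True
      then have r: "0 < r" "r < \<delta>" "r \<le> 1" using a b by auto
      have "\<eta>\<^sup>2 \<le> \<bar>r^(n-1) * deriv F r\<bar>\<^sup>2"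
        using H[OF r(1,2)] eta by (intro power_mono) auto
      then have "\<eta>\<^sup>2 / r \<le> (r^(n-1) * deriv F r)\<^sup>2 / r" using r by (simp add: divide_right_mono)
      also have "\<dots> \<le> (deriv F r)\<^sup>2 * r^(n-1)"
        using n23
      proof
        assume "n = 2" then show ?thesis using r by (simp add: power2_eq_square field_simps)
      next
        assume n3: "n = 3"
        have "(r^(n-1) * deriv F r)\<^sup>2 / r = ((deriv F r)\<^sup>2 * r^(n-1)) * r"
          using r n3 by (simp add: power2_eq_square field_simps)
        also have "\<dots> \<le> (deriv F r)\<^sup>2 * r^(n-1)" using r by (intro mult_left_le) auto
        finally show ?thesis .
      qed
      also have "\<dots> \<le> ((F r)\<^sup>2 + (deriv F r)\<^sup>2) * r ^ (n - 1)"
        using r by (simp add: distrib_right)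
      finally have le: "\<eta>\<^sup>2 / r \<le> ((F r)\<^sup>2 + (deriv F r)\<^sup>2) * r ^ (n - 1)" .
      show ?thesis using True r ennreal_leI[OF le] by (simp add: indicator_def del: ennreal_plus)
    qed simp
  qed
  finally have "\<eta>\<^sup>2 * real N \<le> c" using c by (simp add: ennreal_le_iff)
  moreover have "c < \<eta>\<^sup>2 * real N" using N eta by (simp add: field_simps)
  ultimately show False by simp
qed


lemma G_upper:
  assumes r: "r > 0" and d: "\<And>s. 0 < s \<Longrightarrow> s \<le> r \<Longrightarrow> (\<psi> has_real_derivative \<psi>' s) (at s)"
    and le: "\<And>s. 0 < s \<Longrightarrow> s \<le> r \<Longrightarrow> s^(n-1) * (F s - F s^(2*k+1)) \<le> \<psi>' s"
    and nn: "\<And>s. 0 < s \<Longrightarrow> s \<le> r \<Longrightarrow> \<psi> s \<ge> 0"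
  shows "r^(n-1) * deriv F r \<le> \<psi> r"
proof (rule field_le_epsilon)
  fix e :: real assume e: "0 < e"
  obtain \<rho> where \<rho>: "0 < \<rho>" "\<rho> < r" "\<bar>\<rho>^(n-1) * deriv F \<rho>\<bar> < e" using liminf[OF e r] by blast
  have "(\<lambda>s. s^(n-1) * deriv F s) r - (\<lambda>s. s^(n-1) * deriv F s) \<rho> \<le> \<psi> r - \<psi> \<rho>"
    by (rule deriv_cmp[of \<rho> r _ "\<lambda>s. s^(n-1) * (F s - F s^(2*k+1))" _ \<psi>'])
       (use \<rho> dG d le in auto)
  then show "r^(n-1) * deriv F r \<le> \<psi> r + e" using \<rho> nn[of \<rho>] by auto
qed

lemma G_lower:
  assumes r: "r > 0" and d: "\<And>s. 0 < s \<Longrightarrow> s \<le> r \<Longrightarrow> (\<psi> has_real_derivative \<psi>' s) (at s)"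
    and le: "\<And>s. 0 < s \<Longrightarrow> s \<le> r \<Longrightarrow> \<psi>' s \<le> s^(n-1) * (F s - F s^(2*k+1))"
    and nn: "\<And>s. 0 < s \<Longrightarrow> s \<le> r \<Longrightarrow> \<psi> s \<le> 0"
  shows "\<psi> r \<le> r^(n-1) * deriv F r"
proof (rule field_le_epsilon)
  fix e :: real assume e: "0 < e"
  obtain \<rho> where \<rho>: "0 < \<rho>" "\<rho> < r" "\<bar>\<rho>^(n-1) * deriv F \<rho>\<bar> < e" using liminf[OF e r] by blast
  have "\<psi> r - \<psi> \<rho> \<le> (\<lambda>s. s^(n-1) * deriv F s) r - (\<lambda>s. s^(n-1) * deriv F s) \<rho>"
    by (rule deriv_cmp[of \<rho> r _ \<psi>' _ "\<lambda>s. s^(n-1) * (F s - F s^(2*k+1))"])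
       (use \<rho> dG d le in auto)
  then show "\<psi> r \<le> r^(n-1) * deriv F r + e" using \<rho> nn[of \<rho>] by auto
qed

lemma Fp_upper:
  assumes r: "0 < r" "r \<le> 1" shows "deriv F r \<le> 1"
proof -
  have "r^(n-1) * deriv F r \<le> (\<lambda>s. s^n) r"
  proof (rule G_upper[OF r(1)])
    fix s :: real assume s: "0 < s" "s \<le> r"
    show "((\<lambda>s. s^n) has_real_derivative real n * s^(n - Suc 0)) (at s)" by (rule DERIV_pow)
    have "s^(n-1) * (F s - F s^(2*k+1)) \<le> s^(n-1) * 1"
      using s pos[of s] F_minus_pow_le1[of "F s" k] by (intro mult_left_mono) auto
    also have "\<dots> \<le> real n * s^(n - Suc 0)" using n23 s by auto
    finally show "s^(n-1) * (F s - F s^(2*k+1)) \<le> real n * s^(n - Suc 0)" .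
    show "0 \<le> s^n" using s by simp
  qed
  also have "\<dots> = r^(n-1) * r" using n23 by (auto simp: power2_eq_square power3_eq_cube)
  finally have "deriv F r \<le> r" using r by (simp add: mult_le_cancel_left_pos)
  then show ?thesis using r by simp
qed

lemma Fp_lower_gen:
  assumes a: "0 \<le> a" and D: "0 \<le> D" and cn: "real (2*k+1) * a < real n"
    and Fb: "\<And>s. 0 < s \<Longrightarrow> s \<le> 1 \<Longrightarrow> F s \<le> D * s powr (-a)"
    and r: "0 < r" "r \<le> 1"
  shows "- (D^(2*k+1) / (real n - real (2*k+1) * a)) * r powr (1 - real (2*k+1) * a) \<le> deriv F r"
proof -
  define c where "c = real (2*k+1) * a"
  define p where "p = real n - c"
  define K where "K = D^(2*k+1)"
  have p: "p > 0" using cn by (simp add: p_def c_def)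
  have K: "K \<ge> 0" using D by (simp add: K_def)
  have n1: "real (n - 1) = real n - 1" using n23 by auto
  have "(\<lambda>s. -(K/p) * s powr p) r \<le> r^(n-1) * deriv F r"
  proof (rule G_lower[OF r(1)])
    fix s :: real assume s: "0 < s" "s \<le> r"
    show "((\<lambda>s. -(K/p) * s powr p) has_real_derivative -(K/p) * (p * s powr (p-1))) (at s)"
      by (intro DERIV_cmult has_real_derivative_powr s(1))
    have Fs: "0 < F s" "F s \<le> D * s powr (-a)" using pos Fb s r by auto
    have "F s^(2*k+1) \<le> (D * s powr (-a))^(2*k+1)" using Fs by (intro power_mono) auto
    also have "\<dots> = K * s powr (-c)"
    proof -
      have "(s powr (-a))^(2*k+1) = s powr (real (2*k+1) * (-a))"
        using s by (intro powr_power) auto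
      also have "real (2*k+1) * (-a) = -c" by (simp add: c_def)
      finally show ?thesis by (simp add: K_def power_mult_distrib)
    qed
    finally have "s^(n-1) * F s^(2*k+1) \<le> s^(n-1) * (K * s powr (-c))"
      using s by (intro mult_left_mono) auto
    also have "s^(n-1) * (K * s powr (-c)) = K * s powr (p - 1)"
    proof -
      have "s^(n-1) = s powr real (n-1)" using s by (simp add: powr_realpow)
      then have "s^(n-1) * s powr (-c) = s powr (real (n-1) - c)"
        by (simp add: powr_diff powr_minus_divide)
      also have "real (n-1) - c = p - 1" using n1 by (simp add: p_def)
      finally show ?thesis by (simp add: algebra_simps)
    qed
    finally have A: "s^(n-1) * F s^(2*k+1) \<le> K * s powr (p - 1)" .
    have B: "0 \<le> s^(n-1) * F s" using s Fs by simp
    have "-(K/p) * (p * s powr (p-1)) = - (K * s powr (p - 1))" using p by simp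
    also have "\<dots> \<le> s^(n-1) * (F s - F s^(2*k+1))" using A B by (simp add: algebra_simps)
    finally show "-(K/p) * (p * s powr (p-1)) \<le> s^(n-1) * (F s - F s^(2*k+1))" .
    show "-(K/p) * s powr p \<le> 0" using K p by (simp add: mult_nonneg_nonneg)
  qed
  then have A: "-(K/p) * r powr p \<le> r powr real (n-1) * deriv F r"
    using r by (simp add: powr_realpow)
  have rp: "r powr real (n-1) > 0" using r by simp
  have "-(K/p) * r powr (1 - c) = (-(K/p) * r powr p) / r powr real (n-1)"
  proof -
    have "p - real (n-1) = 1 - c" using n1 by (simp add: p_def)
    then have "r powr (1 - c) = r powr p / r powr real (n-1)" by (metis powr_diff)
    then show ?thesis by simp
  qed
  also have "\<dots> \<le> deriv F r" unfolding pos_divide_le_eq[OF rp] using A by (simp add: mult.commute)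
  finally show ?thesis by (simp add: K_def p_def c_def)
qed

lemma F_upper_from:
  assumes q: "q > 0" "K \<ge> 0" and lb: "\<And>s. 0 < s \<Longrightarrow> s \<le> 1 \<Longrightarrow> -K * s powr (q-1) \<le> deriv F s"
    and r: "0 < r" "r \<le> 1"
  shows "F r \<le> F 1 + K / q"
proof -
  have "(\<lambda>s. -(K/q) * s powr q) 1 - (\<lambda>s. -(K/q) * s powr q) r \<le> F 1 - F r"
  proof (rule deriv_cmp[OF r(2)])
    fix s assume s: "r \<le> s" "s \<le> 1"
    then have s0: "0 < s" using r by simp
    show "((\<lambda>s. -(K/q) * s powr q) has_real_derivative -(K/q) * (q * s powr (q-1))) (at s)"
      by (intro DERIV_cmult has_real_derivative_powr s0)
    show "(F has_real_derivative deriv F s) (at s)" by (rule dF[OF s0])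
    show "-(K/q) * (q * s powr (q-1)) \<le> deriv F s" using lb[OF s0 s(2)] q by simp
  qed
  moreover have "0 \<le> (K/q) * r powr q" using q by simp
  ultimately show ?thesis by simp
qed


lemma F_gen_bound:
  assumes r: "0 < r" "r \<le> 1" and lam: "lm > 0" and c: "Iv = ennreal c" and c0: "0 \<le> c"
  shows "F r \<le> F 1 + (lm * c + integral {r..1} (\<lambda>s. 1 / s^(n-1)) / lm) / 2"
proof -
  have sub: "{r..1} \<subseteq> {0<..}" using r by auto
  have dc: "continuous_on {r..1} (deriv F)" by (rule C2_cont_on(1)[OF C2 sub])
  have cp: "continuous_on {r..1} (\<lambda>s. s^(n-1))" by (intro continuous_intros)
  have ci: "continuous_on {r..1} (\<lambda>s. 1 / s^(n-1))" using r by (intro continuous_intros) auto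
  have c1: "continuous_on {r..1} (\<lambda>s. (deriv F s)\<^sup>2 * s^(n-1))" by (intro continuous_intros dc)
  have "\<bar>F 1 - F r\<bar> \<le> integral {r..1} (\<lambda>s. \<bar>deriv F s\<bar>)"
    using dF sub r by (intro ftc_abs dc) auto
  also have "\<dots> \<le> integral {r..1} (\<lambda>s. (lm/2) * ((deriv F s)\<^sup>2 * s^(n-1)) + (1/(2*lm)) * (1 / s^(n-1)))"
  proof (intro integral_le integrable_continuous_interval continuous_intros dc)
    fix s assume s: "s \<in> {r..1}"
    then have sp: "s^(n-1) > 0" using r by simp
    have "\<bar>deriv F s\<bar> \<le> ((lm * s^(n-1)) * (deriv F s)\<^sup>2 + 1 / (lm * s^(n-1))) / 2"
      using sp lam by (intro amgm_abs) simp
    also have "\<dots> = (lm/2) * ((deriv F s)\<^sup>2 * s^(n-1)) + (1/(2*lm)) * (1 / s^(n-1))"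
      using sp lam by (simp add: field_simps)
    finally show "\<bar>deriv F s\<bar> \<le> (lm/2) * ((deriv F s)\<^sup>2 * s^(n-1)) + (1/(2*lm)) * (1 / s^(n-1))" .
  qed (use r in auto)
  also have "\<dots> = (lm/2) * integral {r..1} (\<lambda>s. (deriv F s)\<^sup>2 * s^(n-1)) + (1/(2*lm)) * integral {r..1} (\<lambda>s. 1 / s^(n-1))"
  proof -
    have i1: "(\<lambda>s. (lm/2) * ((deriv F s)\<^sup>2 * s^(n-1))) integrable_on {r..1}"
      by (intro integrable_continuous_interval continuous_intros c1)
    have i2: "(\<lambda>s. (1/(2*lm)) * (1 / s^(n-1))) integrable_on {r..1}"
      by (intro integrable_continuous_interval continuous_intros ci)
    show ?thesis by (simp only: integral_add[OF i1 i2] integral_mult_right)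
  qed
  also have "\<dots> \<le> (lm/2) * c + (1/(2*lm)) * integral {r..1} (\<lambda>s. 1 / s^(n-1))"
  proof -
    have "ennreal (integral {r..1} (\<lambda>s. (deriv F s)\<^sup>2 * s^(n-1)))
        = (\<integral>\<^sup>+s. ennreal ((deriv F s)\<^sup>2 * s^(n-1)) * indicator {r..1} s \<partial>lborel)"
      by (rule nn_integral_Icc_cont[symmetric, OF c1]) (use r in auto)
    also have "\<dots> \<le> Iv" unfolding Iv_def
    proof (intro nn_integral_mono)
      fix s
      show "ennreal ((deriv F s)\<^sup>2 * s^(n-1)) * indicator {r..1} s
        \<le> ennreal (((F s)\<^sup>2 + (deriv F s)\<^sup>2) * s ^ (n - 1)) * indicator {0<..} s"
      proof (cases "s \<in> {r..1}")
        case True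
        then have s: "0 < s" using r by auto
        have le: "(deriv F s)\<^sup>2 * s^(n-1) \<le> ((F s)\<^sup>2 + (deriv F s)\<^sup>2) * s ^ (n - 1)"
          using s by (simp add: distrib_right)
        show ?thesis using True s ennreal_leI[OF le] by (simp add: indicator_def del: ennreal_plus)
      qed simp
    qed
    finally have "integral {r..1} (\<lambda>s. (deriv F s)\<^sup>2 * s^(n-1)) \<le> c"
      using c c0 by (simp add: ennreal_le_iff)
    then show ?thesis using lam by (intro add_right_mono mult_left_mono) auto
  qed
  finally have "\<bar>F 1 - F r\<bar> \<le> (lm/2) * c + (1/(2*lm)) * integral {r..1} (\<lambda>s. 1 / s^(n-1))" .
  moreover have "(lm/2) * c + (1/(2*lm)) * integral {r..1} (\<lambda>s. 1 / s^(n-1))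
      = (lm * c + integral {r..1} (\<lambda>s. 1 / s^(n-1)) / lm) / 2"
    using lam by (simp add: field_simps)
  moreover have "F r - F 1 \<le> \<bar>F 1 - F r\<bar>" by simp
  ultimately show ?thesis by linarith
qed


lemma F_pow_bound:
  obtains D a where "0 \<le> D" "0 \<le> a" "real (2*k+1) * a < 2"
    "\<And>s. 0 < s \<Longrightarrow> s \<le> 1 \<Longrightarrow> F s \<le> D * s powr (-a)"
proof -
  obtain c where c: "Iv = ennreal c" "0 \<le> c" by (rule Iv_fin)
  define a where "a = (if n = 2 then 1 / (4 * real k + 2) else 1/2)"
  define A0 where "A0 = (if n = 2 then 1 / (2*a) else 1)"
  have a0: "0 < a" using kge by (simp add: a_def)
  have A0: "0 \<le> A0" using a0 by (simp add: A0_def)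
  have ac: "real (2*k+1) * a < 2"
  proof (cases "n = 2")
    case True
    then have "real (2*k+1) * a = 1/2" using kge by (simp add: a_def field_simps)
    then show ?thesis by simp
  next
    case False
    then have "n = 3" using n23 by simp
    then have "k = 1" using k3 by simp
    then show ?thesis using False by (simp add: a_def)
  qed
  have ib: "integral {r..1} (\<lambda>s. 1 / s^(n-1)) \<le> A0 * (r powr (-a))\<^sup>2" if r: "0 < r" "r \<le> 1" for r
    using n23
  proof
    assume n2: "n = 2"
    have "((\<lambda>s. 1 / s^(n-1)) has_integral (ln 1 - ln r)) {r..1}"
    proof (rule fundamental_theorem_of_calculus[OF r(2)])
      fix x assume x: "x \<in> {r..1}"
      then have "x > 0" using r by auto
      then have "(ln has_real_derivative 1/x) (at x within {r..1})"
        by (intro DERIV_ln_divide[THEN DERIV_subset]) auto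
      then show "(ln has_vector_derivative 1 / x^(n-1)) (at x within {r..1})"
        using n2 by (simp add: has_real_derivative_iff_has_vector_derivative)
    qed
    then have "integral {r..1} (\<lambda>s. 1 / s^(n-1)) = ln (1/r)"
      using r by (simp add: integral_unique ln_div)
    also have "\<dots> \<le> (1/r) powr (2*a) / (2*a)"
      using r a0 by (intro ln_powr_bound) auto
    also have "(1/r) powr (2*a) = (r powr (-a))\<^sup>2"
      using r by (simp add: powr_divide powr_minus_divide power2_eq_square powr_add[symmetric])
    finally show ?thesis using n2 by (simp add: A0_def)
  next
    assume n3: "n = 3"
    have "((\<lambda>s. 1 / s^(n-1)) has_integral ((- 1/1) - (- 1/r))) {r..1}"
    proof (rule fundamental_theorem_of_calculus[OF r(2)])
      fix x assume x: "x \<in> {r..1}"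
      then have x0: "x > 0" using r by auto
      have "((\<lambda>s. - 1 / s) has_real_derivative 1 / x^2) (at x within {r..1})"
        using x0 by (auto intro!: derivative_eq_intros simp: power2_eq_square field_simps)
      then show "((\<lambda>s. - 1 / s) has_vector_derivative 1 / x^(n-1)) (at x within {r..1})"
        using n3 by (simp add: has_real_derivative_iff_has_vector_derivative)
    qed
    then have "integral {r..1} (\<lambda>s. 1 / s^(n-1)) = 1/r - 1"
      by (simp add: integral_unique)
    also have "\<dots> \<le> 1/r" by simp
    also have "1/r = (r powr (-a))\<^sup>2"
      using r n3 by (simp add: a_def power2_eq_square powr_add[symmetric] powr_minus_divide)
    finally show ?thesis using n3 by (simp add: A0_def)
  qed
  define D where "D = F 1 + (c + A0) / 2"
  show thesis
  proof (rule that[of D a])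
    show "0 \<le> D" using pos[of 1] c A0 by (simp add: D_def)
    show "0 \<le> a" using a0 by simp
    show "real (2*k+1) * a < 2" by (rule ac)
    fix s :: real assume s: "0 < s" "s \<le> 1"
    define y where "y = s powr (-a)"
    have "y = (1/s) powr a" using s by (simp add: y_def powr_divide powr_minus_divide)
    then have y1: "1 \<le> y" using s a0 by (simp add: ge_one_powr_ge_zero)
    have "F s \<le> F 1 + (y * c + integral {s..1} (\<lambda>t. 1 / t^(n-1)) / y) / 2"
      using y1 by (intro F_gen_bound s c) auto
    also have "integral {s..1} (\<lambda>t. 1 / t^(n-1)) / y \<le> A0 * y\<^sup>2 / y"
      using ib[OF s] y1 by (simp add: y_def divide_right_mono)
    also have "A0 * y\<^sup>2 / y = A0 * y" using y1 by (simp add: power2_eq_square)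
    finally have "F s \<le> F 1 + (c + A0) / 2 * y" by (simp add: field_simps)
    also have "F 1 \<le> F 1 * y" using y1 pos[of 1] by (simp add: mult_le_cancel_left1)
    finally show "F s \<le> D * s powr (-a)" by (simp add: D_def y_def algebra_simps)
  qed
qed

lemma F_near0:
  obtains M where "\<And>r. 0 < r \<Longrightarrow> r \<le> 1 \<Longrightarrow> F r \<le> M \<and> \<bar>deriv F r\<bar> \<le> M"
proof -
  obtain D a where Da: "0 \<le> D" "0 \<le> a" "real (2*k+1) * a < 2"
    "\<And>s. 0 < s \<Longrightarrow> s \<le> 1 \<Longrightarrow> F s \<le> D * s powr (-a)" using F_pow_bound by blast
  define cc where "cc = real (2*k+1) * a"
  have ccn: "real (2*k+1) * a < real n" using Da(3) n23 by auto
  have cc0: "0 \<le> cc" using Da(2) by (simp add: cc_def)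
  define K where "K = D^(2*k+1) / (real n - cc)"
  have K0: "K \<ge> 0" using Da(1) ccn by (simp add: K_def cc_def)
  have q: "2 - cc > 0" using Da(3) by (simp add: cc_def)
  define M1 where "M1 = F 1 + K / (2 - cc)"
  have Fup: "F r \<le> M1" if r: "0 < r" "r \<le> 1" for r
    unfolding M1_def
  proof (rule F_upper_from[OF q K0 _ r])
    fix s :: real assume s: "0 < s" "s \<le> 1"
    have "2 - cc - 1 = 1 - real (2*k+1) * a" by (simp add: cc_def)
    then show "-K * s powr (2 - cc - 1) \<le> deriv F s"
      using Fp_lower_gen[OF Da(2) Da(1) ccn Da(4) s] by (simp add: K_def cc_def)
  qed
  have M10: "0 \<le> M1" using Fup[of 1] pos[of 1] by simp
  have lb: "- (M1^(2*k+1)) \<le> deriv F r" if r: "0 < r" "r \<le> 1" for r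
  proof -
    have "- (M1^(2*k+1) / (real n - real (2*k+1) * 0)) * r powr (1 - real (2*k+1) * 0) \<le> deriv F r"
    proof (rule Fp_lower_gen[OF _ M10 _ _ r])
      show "real (2*k+1) * 0 < real n" using n23 by auto
      fix s :: real assume s: "0 < s" "s \<le> 1"
      show "F s \<le> M1 * s powr (-0)" using Fup[OF s] s by simp
    qed simp
    moreover have "(M1^(2*k+1) / real n) * r \<le> M1^(2*k+1)"
    proof -
      have "(M1^(2*k+1) / real n) * r \<le> (M1^(2*k+1) / real n) * 1"
        using r M10 n23 by (intro mult_left_mono) auto
      also have "\<dots> \<le> M1^(2*k+1)" using M10 n23 by (auto simp: divide_le_eq)
      finally show ?thesis .
    qed
    ultimately show ?thesis using r by simp
  qed
  show thesis
  proof (rule that[of "max M1 (max 1 (M1^(2*k+1)))"])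
    fix r :: real assume r: "0 < r" "r \<le> 1"
    show "F r \<le> max M1 (max 1 (M1^(2*k+1))) \<and> \<bar>deriv F r\<bar> \<le> max M1 (max 1 (M1^(2*k+1)))"
      using Fup[OF r] lb[OF r] Fp_upper[OF r] by auto
  qed
qed

lemma F_far:
  obtains M where "\<And>r. 1 \<le> r \<Longrightarrow> \<bar>F r\<bar> \<le> M \<and> \<bar>deriv F r\<bar> \<le> M"
proof -
  define E where "E = (\<lambda>r. (deriv F r)\<^sup>2/2 - (F r)\<^sup>2/2 + F r^(2*k+2)/(2*k+2))"
  have Ele: "E r \<le> E 1" if r: "1 \<le> r" for r
  proof (rule DERIV_nonpos_imp_nonincreasing[OF r])
    fix x :: real assume x: "1 \<le> x" "x \<le> r"
    then have x0: "x > 0" by simp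
    have "(E has_real_derivative - (real (n-1) / x) * (deriv F x)\<^sup>2) (at x)"
      unfolding E_def by (rule dE[OF dF[OF x0] dF'[OF x0]])
    moreover have "- (real (n-1) / x) * (deriv F x)\<^sup>2 \<le> 0" using x0 by simp
    ultimately show "\<exists>y. (E has_real_derivative y) (at x) \<and> y \<le> 0" by blast
  qed
  define B where "B = max 4 (2 * E 1)"
  show thesis
  proof (rule that[of "sqrt (2 * \<bar>E 1\<bar> + B)"])
    fix r :: real assume r: "1 \<le> r"
    have e: "(deriv F r)\<^sup>2/2 - (F r)\<^sup>2/2 + F r^(2*k+2)/(2*k+2) \<le> E 1" using Ele[OF r] by (simp add: E_def)
    have b1: "(F r)\<^sup>2 \<le> B" using energy_bound(1)[OF kge e] by (simp add: B_def)
    have b2: "(deriv F r)\<^sup>2 \<le> 2 * E 1 + B" using energy_bound(2)[OF kge e] b1 by simp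
    have b1': "(F r)\<^sup>2 \<le> 2 * \<bar>E 1\<bar> + B" using b1 by simp
    have b2': "(deriv F r)\<^sup>2 \<le> 2 * \<bar>E 1\<bar> + B" using b2 by simp
    have A1: "\<bar>F r\<bar> \<le> sqrt (2 * \<bar>E 1\<bar> + B)" using b1' by (metis real_sqrt_abs real_sqrt_le_mono)
    have "\<bar>deriv F r\<bar> \<le> sqrt (2 * \<bar>E 1\<bar> + B)" using b2' by (metis real_sqrt_abs real_sqrt_le_mono)
    then show "\<bar>F r\<bar> \<le> sqrt (2 * \<bar>E 1\<bar> + B) \<and> \<bar>deriv F r\<bar> \<le> sqrt (2 * \<bar>E 1\<bar> + B)" using A1 by simp
  qed
qed

lemma F_bounded23:
  obtains M where "\<And>r. 0 < r \<Longrightarrow> \<bar>F r\<bar> \<le> M \<and> \<bar>deriv F r\<bar> \<le> M"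
proof -
  obtain M1 where M1: "\<And>r. 0 < r \<Longrightarrow> r \<le> 1 \<Longrightarrow> F r \<le> M1 \<and> \<bar>deriv F r\<bar> \<le> M1" using F_near0 by blast
  obtain M2 where M2: "\<And>r. 1 \<le> r \<Longrightarrow> \<bar>F r\<bar> \<le> M2 \<and> \<bar>deriv F r\<bar> \<le> M2" using F_far by blast
  show thesis
  proof (rule that[of "max M1 M2"])
    fix r :: real assume r: "0 < r"
    show "\<bar>F r\<bar> \<le> max M1 M2 \<and> \<bar>deriv F r\<bar> \<le> max M1 M2"
    proof (cases "r \<le> 1")
      case True then show ?thesis using M1[OF r True] pos[OF r] by auto
    next
      case False then show ?thesis using M2[of r] by auto
    qed
  qed
qed

end


lemma pow_diff_bound:
  fixes x y M :: real assumes x: "\<bar>x\<bar> \<le> M" and y: "\<bar>y\<bar> \<le> M" and M: "1 \<le> M"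
  shows "\<bar>x^j - y^j\<bar> \<le> real j * M^j * \<bar>x - y\<bar>"
proof (induction j)
  case 0 show ?case by simp
next
  case (Suc j)
  have eq: "x^Suc j - y^Suc j = x * (x^j - y^j) + (x - y) * y^j" by (simp add: algebra_simps)
  have "\<bar>x * (x^j - y^j)\<bar> \<le> M * (real j * M^j * \<bar>x - y\<bar>)"
    unfolding abs_mult using x Suc.IH by (intro mult_mono) auto
  moreover have "\<bar>(x - y) * y^j\<bar> \<le> \<bar>x - y\<bar> * M^Suc j"
  proof -
    have "\<bar>y^j\<bar> \<le> M^j" unfolding power_abs using y by (intro power_mono) auto
    also have "M^j \<le> M^Suc j" using M by (intro power_increasing) auto
    finally show ?thesis unfolding abs_mult by (intro mult_left_mono) auto
  qed
  ultimately have "\<bar>x^Suc j - y^Suc j\<bar> \<le> M * (real j * M^j * \<bar>x - y\<bar>) + \<bar>x - y\<bar> * M^Suc j"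
    unfolding eq by (smt (verit) abs_triangle_ineq)
  also have "\<dots> = real (Suc j) * M^Suc j * \<bar>x - y\<bar>" by (simp add: algebra_simps)
  finally show ?case .
qed

lemma tri3: fixes a b c :: real shows "\<bar>- a - b + c\<bar> \<le> \<bar>a\<bar> + \<bar>b\<bar> + \<bar>c\<bar>"
  using abs_ge_self[of a] abs_ge_minus_self[of a] abs_ge_self[of b] abs_ge_minus_self[of b]
    abs_ge_self[of c] abs_ge_minus_self[of c] unfolding abs_le_iff by linarith

lemma tri3': fixes a b c :: real shows "0 \<le> a \<Longrightarrow> \<bar>a + b - c\<bar> \<le> a + \<bar>b\<bar> + \<bar>c\<bar>"
  using abs_ge_self[of b] abs_ge_minus_self[of b]
    abs_ge_self[of c] abs_ge_minus_self[of c] unfolding abs_le_iff by linarith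

definition Wconst :: "real \<Rightarrow> nat \<Rightarrow> real \<Rightarrow> real \<Rightarrow> real" where
  "Wconst m k A K = (let B = A + K; M = 2*B\<^sup>2 + 1; D = K*(2*A+K) + B\<^sup>2 in
     1/(2*m^3) + 1/m + 3 * real k * M^k * D + M^k + 2*real k*(real k*M^k*D*M + M^k*D)
     + 4 * real k * M^k * M)"

lemma W_alg:
  fixes m \<epsilon> e Vh Uh Vt Ut A K :: real and k :: nat
  assumes m: "m > 0" and k: "k \<ge> 1" and A: "A \<ge> 0" and K: "K \<ge> 0"
    and eps: "0 < \<epsilon>" "\<epsilon> \<le> 1" "\<epsilon> < m" and e: "e > 0" "e^k = \<epsilon>"
    and b: "\<bar>Vh\<bar> \<le> A" "\<bar>Uh\<bar> \<le> A" "\<bar>Vt\<bar> \<le> K*\<epsilon>\<^sup>2" "\<bar>Ut\<bar> \<le> K*\<epsilon>\<^sup>2"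
  defines "vv \<equiv> e * (Vh + Vt)" and "uu \<equiv> (\<epsilon> * e) * (Uh + Ut)" and "\<omega> \<equiv> sqrt (m\<^sup>2 - \<epsilon>\<^sup>2)"
  shows "\<bar>1 / (2 * m) - Vh ^ (2 * k) - (m - \<omega> - (vv\<^sup>2 - uu\<^sup>2) ^ k) / \<epsilon>\<^sup>2\<bar> \<le> Wconst m k A K * \<epsilon>\<^sup>2"
    and "\<bar>\<omega> - m - (vv\<^sup>2 - uu\<^sup>2) ^ k\<bar> \<le> Wconst m k A K * \<epsilon>\<^sup>2"
    and "\<bar>- 1 / (2 * m) + (2 * real k + 1) * Vh ^ (2 * k)
          - (\<omega> - m + (vv\<^sup>2 - uu\<^sup>2) ^ k + 2 * (real k * (vv\<^sup>2 - uu\<^sup>2) ^ (k - 1)) * vv\<^sup>2) / \<epsilon>\<^sup>2\<bar>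
          \<le> Wconst m k A K * \<epsilon>\<^sup>2"
    and "\<bar>2 * (real k * (vv\<^sup>2 - uu\<^sup>2) ^ (k - 1)) * vv * uu / \<epsilon>\<bar> \<le> Wconst m k A K * \<epsilon>\<^sup>2"
    and "\<bar>m - \<omega> + (vv\<^sup>2 - uu\<^sup>2) ^ k - 2 * (real k * (vv\<^sup>2 - uu\<^sup>2) ^ (k - 1)) * uu\<^sup>2\<bar>
          \<le> Wconst m k A K * \<epsilon>\<^sup>2"
proof -
  define B where "B = A + K"
  define M where "M = 2*B\<^sup>2 + 1"
  define D where "D = K*(2*A+K) + B\<^sup>2"
  define V where "V = Vh + Vt"
  define U where "U = Uh + Ut"
  define P where "P = V\<^sup>2 - \<epsilon>\<^sup>2 * U\<^sup>2"
  have C0: "Wconst m k A K = 1/(2*m^3) + 1/m + 3 * real k * M^k * D + M^k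
     + 2*real k*(real k*M^k*D*M + M^k*D) + 4 * real k * M^k * M"
    by (simp add: Wconst_def Let_def B_def M_def D_def)
  have B0: "0 \<le> B" using A K by (simp add: B_def)
  have M1: "1 \<le> M" by (simp add: M_def)
  have D0: "0 \<le> D" using A K by (simp add: D_def)
  have e2: "\<epsilon>\<^sup>2 \<le> 1" using eps by (simp add: power_le_one)
  have e20: "0 < \<epsilon>\<^sup>2" using eps by simp
  have Ke: "K * \<epsilon>\<^sup>2 \<le> K" using K e2 by (simp add: mult_left_le)
  have aV: "\<bar>V\<bar> \<le> B" using abs_triangle_ineq[of Vh Vt] b Ke unfolding V_def B_def by linarith
  have aU: "\<bar>U\<bar> \<le> B" using abs_triangle_ineq[of Uh Ut] b Ke unfolding U_def B_def by linarith
  have V2: "V\<^sup>2 \<le> B\<^sup>2" using aV by (metis abs_le_square_iff abs_of_nonneg B0 power2_abs)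
  have U2: "U\<^sup>2 \<le> B\<^sup>2" using aU by (metis abs_le_square_iff abs_of_nonneg B0 power2_abs)
  have Vh2: "Vh\<^sup>2 \<le> B\<^sup>2"
  proof -
    have "\<bar>Vh\<bar> \<le> B" using b(1) K by (simp add: B_def)
    then show ?thesis by (metis abs_le_square_iff abs_of_nonneg B0 power2_abs)
  qed
  have eU: "\<epsilon>\<^sup>2 * U\<^sup>2 \<le> B\<^sup>2" using e2 U2 by (meson mult_left_le_one_le order_trans zero_le_power2 e20 less_imp_le)
  have aP: "\<bar>P\<bar> \<le> M" using V2 eU by (simp add: P_def M_def abs_le_iff) (smt (verit) zero_le_power2 mult_nonneg_nonneg)
  have aVh2: "\<bar>Vh\<^sup>2\<bar> \<le> M" using Vh2 zero_le_power2[of B] unfolding M_def abs_power2 by linarith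
  have aV2: "\<bar>V\<^sup>2\<bar> \<le> M" using V2 zero_le_power2[of B] unfolding M_def abs_power2 by linarith
  have dV: "\<bar>V\<^sup>2 - Vh\<^sup>2\<bar> \<le> K*(2*A+K) * \<epsilon>\<^sup>2"
  proof -
    have "V\<^sup>2 - Vh\<^sup>2 = Vt * (2*Vh + Vt)" by (simp add: V_def power2_eq_square algebra_simps)
    then have "\<bar>V\<^sup>2 - Vh\<^sup>2\<bar> = \<bar>Vt\<bar> * \<bar>2*Vh + Vt\<bar>" by (simp add: abs_mult)
    also have "\<dots> \<le> (K*\<epsilon>\<^sup>2) * (2*A + K)"
    proof (rule mult_mono)
      show "\<bar>2*Vh + Vt\<bar> \<le> 2*A + K" using abs_triangle_ineq[of "2*Vh" Vt] b Ke by simp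
    qed (use b in auto)
    finally show ?thesis by (simp add: algebra_simps)
  qed
  have dP: "\<bar>P - Vh\<^sup>2\<bar> \<le> D * \<epsilon>\<^sup>2"
  proof -
    have "P - Vh\<^sup>2 = (V\<^sup>2 - Vh\<^sup>2) - \<epsilon>\<^sup>2 * U\<^sup>2" by (simp add: P_def)
    then have "\<bar>P - Vh\<^sup>2\<bar> \<le> \<bar>V\<^sup>2 - Vh\<^sup>2\<bar> + \<bar>\<epsilon>\<^sup>2 * U\<^sup>2\<bar>" by (metis abs_triangle_ineq4)
    then have "\<bar>P - Vh\<^sup>2\<bar> \<le> \<bar>V\<^sup>2 - Vh\<^sup>2\<bar> + \<epsilon>\<^sup>2 * U\<^sup>2" by (simp add: abs_mult)
    also have "\<epsilon>\<^sup>2 * U\<^sup>2 \<le> \<epsilon>\<^sup>2 * B\<^sup>2" using U2 by (simp add: mult_left_mono)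
    finally show ?thesis using dV by (simp add: D_def algebra_simps)
  qed
  have dV': "\<bar>Vh\<^sup>2 - V\<^sup>2\<bar> \<le> D * \<epsilon>\<^sup>2"
  proof -
    have "K*(2*A+K) * \<epsilon>\<^sup>2 \<le> D * \<epsilon>\<^sup>2" using e20 by (simp add: D_def)
    then show ?thesis using dV by (simp add: abs_minus_commute)
  qed
  have MkD: "0 \<le> real k * M^k * D" using M1 D0 by simp
  have pk: "\<bar>P^k - (Vh\<^sup>2)^k\<bar> \<le> real k * M^k * D * \<epsilon>\<^sup>2"
  proof -
    have "\<bar>P^k - (Vh\<^sup>2)^k\<bar> \<le> real k * M^k * \<bar>P - Vh\<^sup>2\<bar>" by (rule pow_diff_bound[OF aP aVh2 M1])
    also have "\<dots> \<le> real k * M^k * (D * \<epsilon>\<^sup>2)" using dP M1 by (intro mult_left_mono) auto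
    finally show ?thesis by (simp add: algebra_simps)
  qed
  have pk1: "\<bar>(Vh\<^sup>2)^(k-1) - P^(k-1)\<bar> \<le> real k * M^k * D * \<epsilon>\<^sup>2"
  proof -
    have "\<bar>(Vh\<^sup>2)^(k-1) - P^(k-1)\<bar> \<le> real (k-1) * M^(k-1) * \<bar>Vh\<^sup>2 - P\<bar>" by (rule pow_diff_bound[OF aVh2 aP M1])
    also have "\<dots> \<le> real k * M^k * (D * \<epsilon>\<^sup>2)"
    proof (rule mult_mono)
      show "real (k-1) * M^(k-1) \<le> real k * M^k"
        using M1 by (intro mult_mono power_increasing) auto
      show "\<bar>Vh\<^sup>2 - P\<bar> \<le> D * \<epsilon>\<^sup>2" using dP by (simp add: abs_minus_commute)
    qed (use M1 D0 in auto)
    finally show ?thesis by (simp add: algebra_simps)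
  qed
  have Pk: "\<bar>P^k\<bar> \<le> M^k" unfolding power_abs using aP by (intro power_mono) auto
  have Pk1: "\<bar>P^(k-1)\<bar> \<le> M^k"
  proof -
    have "\<bar>P^(k-1)\<bar> \<le> M^(k-1)" unfolding power_abs using aP by (intro power_mono) auto
    also have "\<dots> \<le> M^k" using M1 by (intro power_increasing) auto
    finally show ?thesis .
  qed
  have e2k: "(e\<^sup>2)^k = \<epsilon>\<^sup>2"
  proof -
    have "(e\<^sup>2)^k = (e^k)\<^sup>2" by (simp add: power_mult[symmetric] mult.commute)
    then show ?thesis using e by simp
  qed
  have vu: "vv\<^sup>2 - uu\<^sup>2 = e\<^sup>2 * P"
    by (simp add: vv_def uu_def P_def V_def U_def power2_eq_square algebra_simps)
  have f: "(vv\<^sup>2 - uu\<^sup>2)^k = \<epsilon>\<^sup>2 * P^k" by (simp add: vu power_mult_distrib e2k)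
  have fp: "(vv\<^sup>2 - uu\<^sup>2)^(k-1) * e\<^sup>2 = \<epsilon>\<^sup>2 * P^(k-1)"
  proof -
    have "(e\<^sup>2)^(k-1) * e\<^sup>2 = (e\<^sup>2)^k" using k by (metis Suc_diff_1 less_le_trans zero_less_one power_Suc2)
    then show ?thesis using e2k by (simp add: vu power_mult_distrib algebra_simps)
  qed
  have vv2: "vv\<^sup>2 = e\<^sup>2 * V\<^sup>2" by (simp add: vv_def V_def power_mult_distrib)
  have uu2: "uu\<^sup>2 = \<epsilon>\<^sup>2 * (e\<^sup>2 * U\<^sup>2)" by (simp add: uu_def U_def power_mult_distrib)
  have vvuu: "vv * uu = \<epsilon> * (e\<^sup>2 * (V * U))" by (simp add: vv_def uu_def V_def U_def power2_eq_square algebra_simps)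
  \<comment> \<open>omega\<close>
  have em: "\<epsilon>\<^sup>2 \<le> m\<^sup>2" using power_mono[of \<epsilon> m 2] eps by auto
  have w0: "0 \<le> \<omega>" using em by (simp add: \<omega>_def)
  have w2: "\<omega>\<^sup>2 = m\<^sup>2 - \<epsilon>\<^sup>2" using em by (simp add: \<omega>_def)
  have mw: "m + \<omega> > 0" using m w0 by simp
  have mwe: "m - \<omega> = \<epsilon>\<^sup>2 / (m + \<omega>)"
  proof -
    have "(m - \<omega>) * (m + \<omega>) = \<epsilon>\<^sup>2" using w2 by (simp add: power2_eq_square algebra_simps)
    then show ?thesis using mw by (simp add: field_simps)
  qed
  have hw: "(m - \<omega>) / \<epsilon>\<^sup>2 = 1 / (m + \<omega>)" using mwe e20 by (simp add: field_simps)
  have r1: "\<bar>1/(2*m) - 1/(m + \<omega>)\<bar> \<le> 1/(2*m^3) * \<epsilon>\<^sup>2"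
  proof -
    have "1/(2*m) - 1/(m + \<omega>) = - (m - \<omega>) / (2*m*(m+\<omega>))" using m mw by (simp add: field_simps)
    also have "\<dots> = - \<epsilon>\<^sup>2 / (2*m*(m+\<omega>)^2)" unfolding mwe using mw m by (simp add: power2_eq_square)
    finally have "\<bar>1/(2*m) - 1/(m + \<omega>)\<bar> = \<epsilon>\<^sup>2 / (2*m*(m+\<omega>)^2)" using m mw by simp
    also have "\<dots> \<le> \<epsilon>\<^sup>2 / (2*m*m^2)"
      using m mw w0 e20 by (intro divide_left_mono mult_left_mono power_mono mult_pos_pos) auto
    finally show ?thesis by (simp add: power2_eq_square power3_eq_cube)
  qed
  have r2: "1 / (m + \<omega>) \<le> 1/m" using m w0 by (simp add: frac_le)
  have r20: "0 \<le> 1 / (m + \<omega>)" using mw by simp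
  have vh2k: "Vh^(2*k) = (Vh\<^sup>2)^k" by (simp add: power_mult)
  define a1 where "a1 = 1/(2*m^3)"
  define a2 where "a2 = 1/m"
  define a3 where "a3 = real k * M^k * D"
  define a4 where "a4 = M^k"
  define a5 where "a5 = real k * (real k * M^k * D * M + M^k * D)"
  define a6 where "a6 = real k * M^k * M"
  have C0': "Wconst m k A K = a1 + a2 + 3*a3 + a4 + 2*a5 + 4*a6"
    unfolding C0 a1_def a2_def a3_def a4_def a5_def a6_def by (simp add: algebra_simps)
  have apos: "0 \<le> a1" "0 \<le> a2" "0 \<le> a3" "0 \<le> a4" "0 \<le> a5" "0 \<le> a6"
    using m M1 D0 by (auto simp: a1_def a2_def a3_def a4_def a5_def a6_def)
  have fin: "\<And>c. c \<le> Wconst m k A K \<Longrightarrow> c * \<epsilon>\<^sup>2 \<le> Wconst m k A K * \<epsilon>\<^sup>2"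
    using e20 by (intro mult_right_mono) auto
  have mw': "m - \<omega> = \<epsilon>\<^sup>2 * (1/(m+\<omega>))" using mwe by simp
  have mwle: "m - \<omega> \<le> a2 * \<epsilon>\<^sup>2"
  proof -
    have "\<epsilon>\<^sup>2 * (1/(m+\<omega>)) \<le> \<epsilon>\<^sup>2 * (1/m)" using r2 e20 by (intro mult_left_mono) auto
    then show ?thesis unfolding mw' a2_def by (simp only: mult.commute)
  qed
  have mw0: "0 \<le> m - \<omega>" using mw' e20 r20 by simp
  have ePk: "\<bar>\<epsilon>\<^sup>2 * P^k\<bar> \<le> a4 * \<epsilon>\<^sup>2" using Pk e20 by (simp add: abs_mult a4_def mult.commute mult_right_mono)
  have BM: "B\<^sup>2 \<le> M" using zero_le_power2[of B] by (simp add: M_def)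
  have X: "2 * (real k * (vv\<^sup>2 - uu\<^sup>2)^(k-1)) * (e\<^sup>2 * Z) = \<epsilon>\<^sup>2 * (2 * real k * P^(k-1) * Z)" for Z
  proof -
    have "2 * (real k * (vv\<^sup>2 - uu\<^sup>2)^(k-1)) * (e\<^sup>2 * Z) = 2 * real k * ((vv\<^sup>2 - uu\<^sup>2)^(k-1) * e\<^sup>2) * Z"
      by (simp add: algebra_simps)
    then show ?thesis unfolding fp by (simp add: algebra_simps)
  qed
  show "\<bar>1 / (2 * m) - Vh ^ (2 * k) - (m - \<omega> - (vv\<^sup>2 - uu\<^sup>2) ^ k) / \<epsilon>\<^sup>2\<bar> \<le> Wconst m k A K * \<epsilon>\<^sup>2"
  proof -
    have "(m - \<omega> - (vv\<^sup>2 - uu\<^sup>2) ^ k) / \<epsilon>\<^sup>2 = (m - \<omega>)/\<epsilon>\<^sup>2 - P^k"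
      using e20 by (simp add: f diff_divide_distrib)
    then have "1 / (2 * m) - Vh ^ (2 * k) - (m - \<omega> - (vv\<^sup>2 - uu\<^sup>2) ^ k) / \<epsilon>\<^sup>2
        = (1/(2*m) - 1/(m + \<omega>)) + (P^k - (Vh\<^sup>2)^k)" by (simp add: hw vh2k)
    then have "\<bar>1 / (2 * m) - Vh ^ (2 * k) - (m - \<omega> - (vv\<^sup>2 - uu\<^sup>2) ^ k) / \<epsilon>\<^sup>2\<bar>
       \<le> (a1 + a3) * \<epsilon>\<^sup>2" using r1 pk unfolding a1_def a3_def by (simp add: algebra_simps)
    also have "\<dots> \<le> Wconst m k A K * \<epsilon>\<^sup>2" using apos by (intro fin) (simp add: C0')
    finally show ?thesis .
  qed
  show "\<bar>\<omega> - m - (vv\<^sup>2 - uu\<^sup>2) ^ k\<bar> \<le> Wconst m k A K * \<epsilon>\<^sup>2"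
  proof -
    have "\<bar>\<omega> - m - (vv\<^sup>2 - uu\<^sup>2) ^ k\<bar> = \<bar>-(m - \<omega>) - \<epsilon>\<^sup>2 * P^k\<bar>" by (simp add: f)
    also have "\<dots> \<le> (m - \<omega>) + \<bar>\<epsilon>\<^sup>2 * P^k\<bar>" using mw0 by (simp add: abs_le_iff) linarith
    also have "\<dots> \<le> (a2 + a4) * \<epsilon>\<^sup>2" using mwle ePk by (simp add: algebra_simps)
    also have "\<dots> \<le> Wconst m k A K * \<epsilon>\<^sup>2" using apos by (intro fin) (simp add: C0')
    finally show ?thesis .
  qed
  show "\<bar>- 1 / (2 * m) + (2 * real k + 1) * Vh ^ (2 * k)
          - (\<omega> - m + (vv\<^sup>2 - uu\<^sup>2) ^ k + 2 * (real k * (vv\<^sup>2 - uu\<^sup>2) ^ (k - 1)) * vv\<^sup>2) / \<epsilon>\<^sup>2\<bar>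
          \<le> Wconst m k A K * \<epsilon>\<^sup>2"
  proof -
    have T: "2 * (real k * (vv\<^sup>2 - uu\<^sup>2) ^ (k - 1)) * vv\<^sup>2 = \<epsilon>\<^sup>2 * (2 * real k * P^(k-1) * V\<^sup>2)"
    proof -
      have "2 * (real k * (vv\<^sup>2 - uu\<^sup>2) ^ (k - 1)) * vv\<^sup>2 = 2 * (real k * (vv\<^sup>2 - uu\<^sup>2) ^ (k - 1)) * (e\<^sup>2 * V\<^sup>2)"
        by (simp only: vv2[symmetric])
      also have "\<dots> = \<epsilon>\<^sup>2 * (2 * real k * P^(k-1) * V\<^sup>2)" by (rule X)
      finally show ?thesis .
    qed
    have wm: "(\<omega> - m)/\<epsilon>\<^sup>2 = - (1/(m+\<omega>))"
    proof -
      have "(\<omega> - m)/\<epsilon>\<^sup>2 = - ((m - \<omega>)/\<epsilon>\<^sup>2)" by (simp add: minus_divide_left)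
      then show ?thesis using hw by simp
    qed
    have "(\<omega> - m + (vv\<^sup>2 - uu\<^sup>2) ^ k + 2 * (real k * (vv\<^sup>2 - uu\<^sup>2) ^ (k - 1)) * vv\<^sup>2) / \<epsilon>\<^sup>2
        = (\<omega> - m)/\<epsilon>\<^sup>2 + P^k + 2 * real k * P^(k-1) * V\<^sup>2"
      unfolding T f using e20 by (simp add: add_divide_distrib)
    also have "\<dots> = - (1/(m+\<omega>)) + P^k + 2 * real k * P^(k-1) * V\<^sup>2" by (simp add: wm)
    finally have eq1: "(\<omega> - m + (vv\<^sup>2 - uu\<^sup>2) ^ k + 2 * (real k * (vv\<^sup>2 - uu\<^sup>2) ^ (k - 1)) * vv\<^sup>2) / \<epsilon>\<^sup>2
        = - (1/(m+\<omega>)) + P^k + 2 * real k * P^(k-1) * V\<^sup>2" .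
    have vk: "(Vh\<^sup>2)^k = (Vh\<^sup>2)^(k-1) * Vh\<^sup>2"
      using k by (metis Suc_diff_1 less_le_trans zero_less_one power_Suc2)
    define Y where "Y = (Vh\<^sup>2)^(k-1) * Vh\<^sup>2 - P^(k-1) * V\<^sup>2"
    have eqE: "- 1 / (2 * m) + (2 * real k + 1) * Vh ^ (2 * k)
          - (\<omega> - m + (vv\<^sup>2 - uu\<^sup>2) ^ k + 2 * (real k * (vv\<^sup>2 - uu\<^sup>2) ^ (k - 1)) * vv\<^sup>2) / \<epsilon>\<^sup>2
        = - (1/(2*m) - 1/(m+\<omega>)) - (P^k - (Vh\<^sup>2)^k) + 2 * real k * Y"
      unfolding eq1 vh2k Y_def by (simp add: vk algebra_simps)
    have aY: "\<bar>Y\<bar> \<le> (real k * M^k * D * M + M^k * D) * \<epsilon>\<^sup>2"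
    proof -
      have "Y = ((Vh\<^sup>2)^(k-1) - P^(k-1)) * Vh\<^sup>2 + P^(k-1) * (Vh\<^sup>2 - V\<^sup>2)"
        by (simp add: Y_def algebra_simps)
      then have "\<bar>Y\<bar> \<le> \<bar>(Vh\<^sup>2)^(k-1) - P^(k-1)\<bar> * \<bar>Vh\<^sup>2\<bar> + \<bar>P^(k-1)\<bar> * \<bar>Vh\<^sup>2 - V\<^sup>2\<bar>"
        by (metis abs_mult abs_triangle_ineq)
      also have "\<dots> \<le> (real k * M^k * D * \<epsilon>\<^sup>2) * M + M^k * (D * \<epsilon>\<^sup>2)"
        using pk1 aVh2 Pk1 dV' MkD e20 M1 by (intro add_mono mult_mono) auto
      finally show ?thesis by (simp add: algebra_simps)
    qed
    have "\<bar>- 1 / (2 * m) + (2 * real k + 1) * Vh ^ (2 * k)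
          - (\<omega> - m + (vv\<^sup>2 - uu\<^sup>2) ^ k + 2 * (real k * (vv\<^sup>2 - uu\<^sup>2) ^ (k - 1)) * vv\<^sup>2) / \<epsilon>\<^sup>2\<bar>
        \<le> \<bar>1/(2*m) - 1/(m+\<omega>)\<bar> + \<bar>P^k - (Vh\<^sup>2)^k\<bar> + 2 * real k * \<bar>Y\<bar>"
    proof -
      have "\<bar>2 * real k * Y\<bar> = 2 * real k * \<bar>Y\<bar>" by (simp add: abs_mult)
      then show "?thesis" unfolding eqE using tri3[of "1/(2*m) - 1/(m+\<omega>)" "P^k - (Vh\<^sup>2)^k" "2 * real k * Y"] by simp
    qed
    also have "\<dots> \<le> a1 * \<epsilon>\<^sup>2 + a3 * \<epsilon>\<^sup>2 + 2 * real k * ((real k * M^k * D * M + M^k * D) * \<epsilon>\<^sup>2)"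
      using r1 pk aY unfolding a1_def a3_def by (intro add_mono mult_left_mono) auto
    also have "\<dots> = (a1 + a3 + 2 * a5) * \<epsilon>\<^sup>2" by (simp add: a5_def algebra_simps)
    also have "\<dots> \<le> Wconst m k A K * \<epsilon>\<^sup>2" using apos by (intro fin) (simp add: C0')
    finally show ?thesis .
  qed
  show "\<bar>2 * (real k * (vv\<^sup>2 - uu\<^sup>2) ^ (k - 1)) * vv * uu / \<epsilon>\<bar> \<le> Wconst m k A K * \<epsilon>\<^sup>2"
  proof -
    have "2 * (real k * (vv\<^sup>2 - uu\<^sup>2) ^ (k - 1)) * vv * uu / \<epsilon>
        = 2 * (real k * (vv\<^sup>2 - uu\<^sup>2) ^ (k - 1)) * (e\<^sup>2 * (V * U))"
      using eps by (simp add: vvuu mult.assoc)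
    also have "\<dots> = \<epsilon>\<^sup>2 * (2 * real k * P^(k-1) * (V * U))" by (rule X)
    finally have eq: "2 * (real k * (vv\<^sup>2 - uu\<^sup>2) ^ (k - 1)) * vv * uu / \<epsilon> = \<epsilon>\<^sup>2 * (2 * real k * P^(k-1) * (V * U))" .
    have VU: "\<bar>V * U\<bar> \<le> M"
    proof -
      have "\<bar>V * U\<bar> \<le> B * B" unfolding abs_mult using aV aU B0 by (intro mult_mono) auto
      then show ?thesis using BM by (simp add: power2_eq_square)
    qed
    have "\<bar>2 * real k * P^(k-1) * (V * U)\<bar> \<le> 2 * real k * M^k * M"
      unfolding abs_mult using Pk1 VU M1 by (intro mult_mono) auto
    then have "\<epsilon>\<^sup>2 * \<bar>2 * real k * P^(k-1) * (V * U)\<bar> \<le> \<epsilon>\<^sup>2 * (2 * real k * M^k * M)"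
      using e20 by (intro mult_left_mono) auto
    then have "\<bar>2 * (real k * (vv\<^sup>2 - uu\<^sup>2) ^ (k - 1)) * vv * uu / \<epsilon>\<bar> \<le> (2 * a6) * \<epsilon>\<^sup>2"
      unfolding eq a6_def abs_mult by (simp add: algebra_simps)
    also have "\<dots> \<le> Wconst m k A K * \<epsilon>\<^sup>2" using apos by (intro fin) (simp add: C0')
    finally show ?thesis .
  qed
  show "\<bar>m - \<omega> + (vv\<^sup>2 - uu\<^sup>2) ^ k - 2 * (real k * (vv\<^sup>2 - uu\<^sup>2) ^ (k - 1)) * uu\<^sup>2\<bar>
          \<le> Wconst m k A K * \<epsilon>\<^sup>2"
  proof -
    have eq: "2 * (real k * (vv\<^sup>2 - uu\<^sup>2) ^ (k - 1)) * uu\<^sup>2 = \<epsilon>\<^sup>2 * (2 * real k * P^(k-1) * (\<epsilon>\<^sup>2 * U\<^sup>2))"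
    proof -
      have "uu\<^sup>2 = e\<^sup>2 * (\<epsilon>\<^sup>2 * U\<^sup>2)" using uu2 by (simp add: algebra_simps)
      then have "2 * (real k * (vv\<^sup>2 - uu\<^sup>2) ^ (k - 1)) * uu\<^sup>2 = 2 * (real k * (vv\<^sup>2 - uu\<^sup>2) ^ (k - 1)) * (e\<^sup>2 * (\<epsilon>\<^sup>2 * U\<^sup>2))"
        by metis
      also have "\<dots> = \<epsilon>\<^sup>2 * (2 * real k * P^(k-1) * (\<epsilon>\<^sup>2 * U\<^sup>2))" by (rule X)
      finally show ?thesis .
    qed
    have eU0: "0 \<le> \<epsilon>\<^sup>2 * U\<^sup>2" by simp
    have "\<bar>2 * real k * P^(k-1) * (\<epsilon>\<^sup>2 * U\<^sup>2)\<bar> \<le> 2 * real k * M^k * M"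
      unfolding abs_mult using Pk1 eU BM M1 eU0 by (intro mult_mono) auto
    then have "\<epsilon>\<^sup>2 * \<bar>2 * real k * P^(k-1) * (\<epsilon>\<^sup>2 * U\<^sup>2)\<bar> \<le> \<epsilon>\<^sup>2 * (2 * real k * M^k * M)"
      using e20 by (intro mult_left_mono) auto
    then have t3: "\<bar>2 * (real k * (vv\<^sup>2 - uu\<^sup>2) ^ (k - 1)) * uu\<^sup>2\<bar> \<le> (2 * a6) * \<epsilon>\<^sup>2"
      unfolding eq a6_def abs_mult by (simp add: algebra_simps)
    have "\<bar>m - \<omega> + (vv\<^sup>2 - uu\<^sup>2) ^ k - 2 * (real k * (vv\<^sup>2 - uu\<^sup>2) ^ (k - 1)) * uu\<^sup>2\<bar>
        \<le> (m - \<omega>) + \<bar>\<epsilon>\<^sup>2 * P^k\<bar> + \<bar>2 * (real k * (vv\<^sup>2 - uu\<^sup>2) ^ (k - 1)) * uu\<^sup>2\<bar>"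
      unfolding f using tri3'[OF mw0] by blast
    also have "\<dots> \<le> (a2 + a4 + 2 * a6) * \<epsilon>\<^sup>2" using mwle ePk t3 by (simp add: algebra_simps)
    also have "\<dots> \<le> Wconst m k A K * \<epsilon>\<^sup>2" using apos by (intro fin) (simp add: C0')
    finally show ?thesis .
  qed
qed


lemma F_bounded1:
  fixes F :: "real \<Rightarrow> real"
  assumes kge: "k \<ge> 1" and C2: "C2_on UNIV F"
    and ode: "\<And>R. deriv (deriv F) R = F R - F R ^ (2*k+1)"
  obtains M where "\<And>R. \<bar>F R\<bar> \<le> M \<and> \<bar>deriv F R\<bar> \<le> M"
proof -
  define E where "E = (\<lambda>r. (deriv F r)\<^sup>2/2 - (F r)\<^sup>2/2 + F r^(2*k+2)/(2*k+2))"
  have dE0: "(E has_real_derivative 0) (at x)" for x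
  proof -
    have d1: "(F has_real_derivative deriv F x) (at x)" using C2_derivs(1)[OF C2] by auto
    have "deriv F differentiable (at x)" using C2 by (auto simp: C2_on_def)
    then have "(deriv F has_real_derivative deriv (deriv F) x) (at x)"
      by (simp add: DERIV_deriv_iff_real_differentiable)
    then have d2: "(deriv F has_real_derivative (F x - F x ^ (2*k+1) - 0 * deriv F x)) (at x)"
      using ode by simp
    show ?thesis using dE[OF d1 d2] unfolding E_def by simp
  qed
  have Ec: "E r = E 0" for r by (rule DERIV_isconst_all) (use dE0 in auto)
  define B where "B = max 4 (2 * E 0)"
  show thesis
  proof (rule that[of "sqrt (2 * \<bar>E 0\<bar> + B)"])
    fix r :: real
    have e: "(deriv F r)\<^sup>2/2 - (F r)\<^sup>2/2 + F r^(2*k+2)/(2*k+2) \<le> E 0" using Ec[of r] by (simp add: E_def)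
    have b1: "(F r)\<^sup>2 \<le> B" using energy_bound(1)[OF kge e] by (simp add: B_def)
    have b2: "(deriv F r)\<^sup>2 \<le> 2 * E 0 + B" using energy_bound(2)[OF kge e] b1 by simp
    have b1': "(F r)\<^sup>2 \<le> 2 * \<bar>E 0\<bar> + B" using b1 by simp
    have b2': "(deriv F r)\<^sup>2 \<le> 2 * \<bar>E 0\<bar> + B" using b2 by simp
    have A1: "\<bar>F r\<bar> \<le> sqrt (2 * \<bar>E 0\<bar> + B)" using b1' by (metis real_sqrt_abs real_sqrt_le_mono)
    have "\<bar>deriv F r\<bar> \<le> sqrt (2 * \<bar>E 0\<bar> + B)" using b2' by (metis real_sqrt_abs real_sqrt_le_mono)
    then show "\<bar>F r\<bar> \<le> sqrt (2 * \<bar>E 0\<bar> + B) \<and> \<bar>deriv F r\<bar> \<le> sqrt (2 * \<bar>E 0\<bar> + B)" using A1 by simp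
  qed
qed

lemma mat_bound:
  fixes a13 a24 a31 a32 a41 a42 c :: real
  assumes "\<bar>a13\<bar> \<le> c" "\<bar>a24\<bar> \<le> c" "\<bar>a31\<bar> \<le> c" "\<bar>a32\<bar> \<le> c" "\<bar>a41\<bar> \<le> c" "\<bar>a42\<bar> \<le> c"
    and c: "0 \<le> c"
  shows "onorm ((*v) ((\<chi> i j. complex_of_real
          (if i = 1 \<and> j = 3 then a13
           else if i = 2 \<and> j = 4 then a24
           else if i = 3 \<and> j = 1 then a31
           else if i = 3 \<and> j = 2 then a32
           else if i = 4 \<and> j = 1 then a41
           else if i = 4 \<and> j = 2 then a42
           else 0)) :: complex^4^4)) \<le> 16 * c"
proof -
  let ?A = "(\<chi> i j. complex_of_real
          (if i = 1 \<and> j = 3 then a13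
           else if i = 2 \<and> j = 4 then a24
           else if i = 3 \<and> j = 1 then a31
           else if i = 3 \<and> j = 2 then a32
           else if i = 4 \<and> j = 1 then a41
           else if i = 4 \<and> j = 2 then a42
           else 0)) :: complex^4^4"
  have e: "norm (?A $ i $ j) \<le> c" for i j
    using assms by auto
  have "onorm ((*v) ?A) \<le> (\<Sum>i\<in>UNIV. \<Sum>j\<in>UNIV. norm (?A $ i $ j))" by (rule onorm_complex_mat)
  also have "\<dots> \<le> (\<Sum>i\<in>(UNIV::4 set). 4 * c)"
  proof (rule sum_mono)
    fix i :: 4
    have "(\<Sum>j\<in>UNIV. norm (?A $ i $ j)) \<le> of_nat (card (UNIV :: 4 set)) * c"
      by (rule sum_bounded_above) (rule e)
    then show "(\<Sum>j\<in>UNIV. norm (?A $ i $ j)) \<le> 4 * c" by simp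
  qed
  also have "\<dots> = 16 * c" by simp
  finally show ?thesis .
qed


theorem lemma5p3:
  fixes n k :: nat and m \<epsilon>1 :: real
    and F :: "real \<Rightarrow> real"
    and v u Vt Ut :: "real \<Rightarrow> real \<Rightarrow> real"
  assumes n: "n \<in> {1, 2, 3}" and k: "k \<ge> 1" and k3: "n = 3 \<longrightarrow> k = 1"
    and m: "m > 0" and e1: "0 < \<epsilon>1" "\<epsilon>1 \<le> m"
    \<comment> \<open>F: positive radial H^1 solution of -\<Delta>F - F^(2k+1) = -F (even on R if n = 1)\<close>
    and F_C2: "C2_on (rdom n) F"
    and F_pos: "\<forall>R\<in>rdom n. F R > 0"
    and F_even: "n = 1 \<longrightarrow> (\<forall>x. F (- x) = F x)"
    and F_eq: "\<forall>R\<in>rdom n. - (deriv (deriv F) R + real (n - 1) / R * deriv F R)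
                              - F R ^ (2 * k + 1) = - F R"
    and F_H1: "H1_sq n F < \<infinity>"
    \<comment> \<open>remainders, twice differentiable, with H^2 norms O(\<epsilon>^2)\<close>
    and Vt_C2: "\<forall>\<epsilon>\<in>{0<..<\<epsilon>1}. C2_on (rdom n) (Vt \<epsilon>)"
    and Ut_C2: "\<forall>\<epsilon>\<in>{0<..<\<epsilon>1}. C2_on (rdom n) (Ut \<epsilon>)"
    and rem: "\<exists>C \<epsilon>0. 0 < \<epsilon>0 \<and> (\<forall>\<epsilon>\<in>{0<..<\<epsilon>0}. \<epsilon> < \<epsilon>1 \<longrightarrow>
                 H2_sq n (Vt \<epsilon>) \<le> ennreal ((C * \<epsilon>\<^sup>2)\<^sup>2) \<and>
                 H2_sq n (Ut \<epsilon>) \<le> ennreal ((C * \<epsilon>\<^sup>2)\<^sup>2))"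
    \<comment> \<open>form of the solitary wave profile\<close>
    and v_def: "\<forall>\<epsilon>\<in>{0<..<\<epsilon>1}. \<forall>r\<in>rdom n.
                 v \<epsilon> r = \<epsilon> powr (1 / real k) * (Vhat m k F (\<epsilon> * r) + Vt \<epsilon> (\<epsilon> * r))"
    and u_def: "\<forall>\<epsilon>\<in>{0<..<\<epsilon>1}. \<forall>r\<in>rdom n.
                 u \<epsilon> r = \<epsilon> powr (1 + 1 / real k) * (Uhat m k F (\<epsilon> * r) + Ut \<epsilon> (\<epsilon> * r))"
    \<comment> \<open>the profile equations, \<omega> = sqrt(m^2 - \<epsilon>^2)\<close>
    and eq1: "\<forall>\<epsilon>\<in>{0<..<\<epsilon>1}. \<forall>r\<in>rdom n.
                 sqrt (m\<^sup>2 - \<epsilon>\<^sup>2) * v \<epsilon> r = deriv (u \<epsilon>) r + real (n - 1) / r * u \<epsilon> r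
                   + m * v \<epsilon> r - ((v \<epsilon> r)\<^sup>2 - (u \<epsilon> r)\<^sup>2) ^ k * v \<epsilon> r"
    and eq2: "\<forall>\<epsilon>\<in>{0<..<\<epsilon>1}. \<forall>r\<in>rdom n.
                 sqrt (m\<^sup>2 - \<epsilon>\<^sup>2) * u \<epsilon> r = - deriv (v \<epsilon>) r - m * u \<epsilon> r
                   + ((v \<epsilon> r)\<^sup>2 - (u \<epsilon> r)\<^sup>2) ^ k * u \<epsilon> r"
  shows "\<exists>C \<epsilon>0. 0 < \<epsilon>0 \<and> \<epsilon>0 \<le> \<epsilon>1 \<and>
           (\<forall>\<epsilon>\<in>{0<..<\<epsilon>0}. \<forall>R\<in>rdom n. mat_opnorm (W_mat m k F (v \<epsilon>) (u \<epsilon>) \<epsilon> R) \<le> C * \<epsilon>\<^sup>2)"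
proof -
  have one_rd: "1 \<in> rdom n" by (simp add: rdom_def)
  have rd_div: "R / \<epsilon> \<in> rdom n" if "\<epsilon> > 0" "R \<in> rdom n" for \<epsilon> R
    using that by (auto simp: rdom_def)
  obtain MF where MF: "\<And>R. R \<in> rdom n \<Longrightarrow> \<bar>F R\<bar> \<le> MF \<and> \<bar>deriv F R\<bar> \<le> MF"
  proof (cases "n = 1")
    case True
    have C2': "C2_on UNIV F" using F_C2 True by (simp add: rdom_def)
    have ode1: "deriv (deriv F) R = F R - F R^(2*k+1)" for R
    proof -
      have h: "- (deriv (deriv F) R + real (n - 1) / R * deriv F R) - F R ^ (2 * k + 1) = - F R"
        using F_eq True by (simp add: rdom_def)
      have "real (n - 1) / R * deriv F R = 0" using True by simp
      then show ?thesis using h by linarith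
    qed
    obtain M1 where "\<And>R. \<bar>F R\<bar> \<le> M1 \<and> \<bar>deriv F R\<bar> \<le> M1" using F_bounded1[OF k C2' ode1] by blast
    then show thesis using that by blast
  next
    case False
    then have n23: "n = 2 \<or> n = 3" using n by auto
    have rd: "rdom n = {0<..}" using False by (simp add: rdom_def)
    have C2': "C2_on {0<..} F" using F_C2 rd by simp
    have pos': "\<And>R. R > 0 \<Longrightarrow> F R > 0" using F_pos rd by auto
    have ode': "deriv (deriv F) R = F R - F R ^ (2*k+1) - real (n-1) / R * deriv F R" if R: "R > 0" for R
    proof -
      have "- (deriv (deriv F) R + real (n - 1) / R * deriv F R) - F R ^ (2 * k + 1) = - F R"
        using F_eq R rd by auto
      then show ?thesis by linarith
    qed
    have sa: "sphere_area n > 0" unfolding sphere_area_def by simp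
    have "ennreal (sphere_area n) * (\<integral>\<^sup>+ r. ennreal (((F r)\<^sup>2 + (deriv F r)\<^sup>2) * r ^ (n - 1)) * indicator {0<..} r \<partial>lborel) < \<infinity>"
      using F_H1 False by (simp add: H1_sq_def)
    then have I1': "(\<integral>\<^sup>+ r. ennreal (((F r)\<^sup>2 + (deriv F r)\<^sup>2) * r ^ (n - 1)) * indicator {0<..} r \<partial>lborel) < \<infinity>"
      using sa by (auto simp: ennreal_mult_less_top top.not_eq_extremum)
    obtain M2 where "\<And>r. 0 < r \<Longrightarrow> \<bar>F r\<bar> \<le> M2 \<and> \<bar>deriv F r\<bar> \<le> M2"
      using F_bounded23[OF n23 k k3 C2' pos' ode' I1'] by blast
    then show thesis using that rd by auto
  qed
  have MF0: "0 \<le> MF" using MF[OF one_rd] by linarith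
  define cV where "cV = (2 * m) powr (- 1 / (2 * real k))"
  define cU where "cU = (2 * m) powr (- 1 / (2 * real k) - 1)"
  have cV0: "0 < cV" "0 < cU" using m by (simp_all add: cV_def cU_def)
  define A where "A = MF * (cV + cU)"
  have A0: "0 \<le> A" using MF0 cV0 by (simp add: A_def)
  have VhA: "\<bar>Vhat m k F R\<bar> \<le> A" if R: "R \<in> rdom n" for R
  proof -
    have "\<bar>Vhat m k F R\<bar> = cV * \<bar>F R\<bar>" using cV0 by (simp add: Vhat_def cV_def abs_mult)
    also have "\<dots> \<le> cV * MF" using MF[OF R] cV0 by (intro mult_left_mono) auto
    also have "\<dots> \<le> A" using MF0 cV0 by (simp add: A_def algebra_simps)
    finally show ?thesis .
  qed
  have UhA: "\<bar>Uhat m k F R\<bar> \<le> A" if R: "R \<in> rdom n" for R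
  proof -
    have "\<bar>Uhat m k F R\<bar> = cU * \<bar>deriv F R\<bar>" using cV0 by (simp add: Uhat_def cU_def abs_mult)
    also have "\<dots> \<le> cU * MF" using MF[OF R] cV0 by (intro mult_left_mono) auto
    also have "\<dots> \<le> A" using MF0 cV0 by (simp add: A_def algebra_simps)
    finally show ?thesis .
  qed
  obtain C \<epsilon>0 where rem0: "0 < \<epsilon>0" and remH: "\<And>\<epsilon>. \<epsilon> \<in> {0<..<\<epsilon>0} \<Longrightarrow> \<epsilon> < \<epsilon>1 \<Longrightarrow>
                 H2_sq n (Vt \<epsilon>) \<le> ennreal ((C * \<epsilon>\<^sup>2)\<^sup>2) \<and>
                 H2_sq n (Ut \<epsilon>) \<le> ennreal ((C * \<epsilon>\<^sup>2)\<^sup>2)"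
    using rem by blast
  define K where "K = 3 * (\<bar>C\<bar> + 1)"
  have K0: "0 \<le> K" by (simp add: K_def)
  define \<epsilon>2 where "\<epsilon>2 = min (min \<epsilon>0 \<epsilon>1) 1"
  show ?thesis
  proof (rule exI[of _ "16 * Wconst m k A K"], rule exI[of _ \<epsilon>2], intro conjI ballI)
    show "0 < \<epsilon>2" using rem0 e1 by (simp add: \<epsilon>2_def)
    show "\<epsilon>2 \<le> \<epsilon>1" by (simp add: \<epsilon>2_def)
    fix \<epsilon> R assume eps: "\<epsilon> \<in> {0<..<\<epsilon>2}" and R: "R \<in> rdom n"
    have es: "0 < \<epsilon>" "\<epsilon> < \<epsilon>0" "\<epsilon> < \<epsilon>1" "\<epsilon> \<le> 1" "\<epsilon> < m" using eps e1 by (auto simp: \<epsilon>2_def)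
    have eps1: "\<epsilon> \<in> {0<..<\<epsilon>1}" using es by simp
    define B where "B = (\<bar>C\<bar> + 1) * \<epsilon>\<^sup>2"
    have B0: "B > 0" using es by (simp add: B_def add_pos_nonneg)
    have CB: "(C * \<epsilon>\<^sup>2)\<^sup>2 \<le> B\<^sup>2"
    proof -
      have "\<bar>C\<bar> * \<epsilon>\<^sup>2 \<le> (\<bar>C\<bar> + 1) * \<epsilon>\<^sup>2" by (intro mult_right_mono) auto
      then have "\<bar>C * \<epsilon>\<^sup>2\<bar> \<le> \<bar>B\<bar>" using B0 by (simp add: B_def abs_mult)
      then show ?thesis by (simp only: abs_le_square_iff)
    qed
    have H: "H2_sq n (Vt \<epsilon>) \<le> ennreal (B\<^sup>2)" "H2_sq n (Ut \<epsilon>) \<le> ennreal (B\<^sup>2)"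
      using remH[of \<epsilon>] es CB by (auto intro: order_trans ennreal_leI)
    have Vtb: "\<bar>Vt \<epsilon> R\<bar> \<le> K * \<epsilon>\<^sup>2"
      using sob_H2[OF n Vt_C2[rule_format, OF eps1] H(1) B0 R] by (simp add: K_def B_def algebra_simps)
    have Utb: "\<bar>Ut \<epsilon> R\<bar> \<le> K * \<epsilon>\<^sup>2"
      using sob_H2[OF n Ut_C2[rule_format, OF eps1] H(2) B0 R] by (simp add: K_def B_def algebra_simps)
    define e where "e = \<epsilon> powr (1 / real k)"
    have e0: "e > 0" using es by (simp add: e_def)
    have ek: "e^k = \<epsilon>"
    proof -
      have "e^k = \<epsilon> powr (real k * (1 / real k))" unfolding e_def using es by (intro powr_power) auto
      also have "real k * (1 / real k) = 1" using k by simp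
      finally show ?thesis using es by simp
    qed
    have r: "R / \<epsilon> \<in> rdom n" by (rule rd_div[OF es(1) R])
    have er: "\<epsilon> * (R / \<epsilon>) = R" using es by simp
    have vR: "v \<epsilon> (R / \<epsilon>) = e * (Vhat m k F R + Vt \<epsilon> R)"
      using v_def eps1 r er by (simp add: e_def)
    have uR: "u \<epsilon> (R / \<epsilon>) = (\<epsilon> * e) * (Uhat m k F R + Ut \<epsilon> R)"
    proof -
      have "\<epsilon> powr (1 + 1 / real k) = \<epsilon> * e" using es by (simp add: e_def powr_add)
      then show ?thesis using u_def eps1 r er by simp
    qed
    note W = W_alg[OF m k A0 K0 es(1) es(4) es(5) e0 ek VhA[OF R] UhA[OF R] Vtb Utb]
    have c0: "0 \<le> Wconst m k A K * \<epsilon>\<^sup>2" using W(2) by (meson abs_ge_zero order_trans)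
    have "mat_opnorm (W_mat m k F (v \<epsilon>) (u \<epsilon>) \<epsilon> R) \<le> 16 * (Wconst m k A K * \<epsilon>\<^sup>2)"
      unfolding mat_opnorm_def W_mat_def Let_def vR uR
      by (rule mat_bound[OF W(1) W(2) W(3) W(4) W(4) W(5) c0])
    then show "mat_opnorm (W_mat m k F (v \<epsilon>) (u \<epsilon>) \<epsilon> R) \<le> 16 * Wconst m k A K * \<epsilon>\<^sup>2"
      by (simp add: algebra_simps)
  qed
qed


end
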